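(* Let $d\in\mathbb{N}_{+}$, $\omega\in\mathbb{R}^d$, $\rho>0$, $m>d+5$, $\beta>0$ with $1/\sqrt\beta\notin\mathbb{Z}$, and $f\in\mathcal{H}^{\rho,m}(\mathbb{T}^{d+1})$. Let $\Omega=\Omega(\sigma,\mu)$ with $\mu$ sufficiently large and $\sigma$ sufficiently small. For $\varepsilon\in\Omega$ let $\mathcal{N}_\varepsilon=\varepsilon(\omega\cdot\partial_\theta)^2+(\omega\cdot\partial_\theta)-\varepsilon\beta\partial_x^4-\varepsilon\partial_x^2$ and $\mathcal{T}_\varepsilon(U)=\varepsilon\mathcal{N}_\varepsilon^{-1}[(U^2)_{xx}+f]$. Then $\mathcal{T}$, defined by $\mathcal{T}(U)_\varepsilon=\mathcal{T}_\varepsilon(U_\varepsilon)$, maps $\mathcal{H}^{\rho,m,\Omega}$ into itself. Precisely, if $\varepsilon\mapsto U_\varepsilon$, $\Omega\to\mathcal{H}^{\rho,m}$, is complex differentiable, then $\varepsilon\mapsto\mathcal{T}_\varepsilon(U_\varepsilon)$, $\Omega\to\mathcal{H}^{\rho,m}$, is also complex differentiable.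
   Context: $\Omega(\sigma,\mu)=\{\varepsilon\in\mathbb{C}:\ \mathrm{Re}\,\varepsilon\ge\mu|\mathrm{Im}\,\varepsilon|,\ \sigma\le|\varepsilon|\le2\sigma\}$. $\mathcal{H}^{\rho,m}$ is the space of analytic $U(\theta,x)=\sum_{k\in\mathbb{Z}^d,j\in\mathbb{Z}}\widehat U_{k,j}e^{\mathrm{i}(k\cdot\theta+jx)}$ on the complex strip of width $\rho$ around $\mathbb{T}^{d+1}$, with $\int_0^{2\pi}U\,dx=0$ (so $\widehat U_{k,0}=0$) and $\|U\|_{\rho,m}^2=\sum|\widehat U_{k,j}|^2e^{2\rho(|k|+|j|)}(|k|^2+|j|^2+1)^m<\infty$. $\mathcal{N}_\varepsilon$ is the Fourier multiplier with symbol $-\varepsilon(k\cdot\omega)^2+\mathrm{i}(k\cdot\omega)-\varepsilon(\beta j^4-j^2)$. $\mathcal{H}^{\rho,m,\Omega}$ is the Banach space of bounded analytic maps $\Omega\to\mathcal{H}^{\rho,m}$ with the supremum norm. *)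

theory Defs
  imports "HOL-Analysis.Analysis"
begin

text \<open>Fourier index (k,j) with k in Z^d (d = CARD('d)) and j in Z.
  An element U of H^{rho,m} is represented by its Fourier coefficients.\<close>

type_synonym 'd fidx = "(int ^ 'd) \<times> int"
type_synonym 'd coeffs = "'d fidx \<Rightarrow> complex"

definition l1norm :: "int ^ ('d::finite) \<Rightarrow> real" where
  "l1norm k = (\<Sum>i\<in>UNIV. \<bar>real_of_int (k $ i)\<bar>)"

definition sqnorm :: "int ^ ('d::finite) \<Rightarrow> real" where
  "sqnorm k = (\<Sum>i\<in>UNIV. (real_of_int (k $ i))\<^sup>2)"

definition kdot :: "int ^ ('d::finite) \<Rightarrow> real ^ 'd \<Rightarrow> real" where
  "kdot k \<omega> = (\<Sum>i\<in>UNIV. real_of_int (k $ i) * \<omega> $ i)"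

definition weight :: "real \<Rightarrow> real \<Rightarrow> 'd::finite fidx \<Rightarrow> real" where
  "weight \<rho> m q = exp (2 * \<rho> * (l1norm (fst q) + \<bar>real_of_int (snd q)\<bar>))
                    * (sqnorm (fst q) + (real_of_int (snd q))\<^sup>2 + 1) powr m"

definition Hnormsq :: "real \<Rightarrow> real \<Rightarrow> ('d::finite) coeffs \<Rightarrow> real" where
  "Hnormsq \<rho> m U = (\<Sum>\<^sub>\<infinity>q. (cmod (U q))\<^sup>2 * weight \<rho> m q)"

definition Hnorm :: "real \<Rightarrow> real \<Rightarrow> ('d::finite) coeffs \<Rightarrow> real" where
  "Hnorm \<rho> m U = sqrt (Hnormsq \<rho> m U)"

text \<open>The space H^{rho,m}: zero x-average and finite norm.\<close>
definition Hspace :: "real \<Rightarrow> real \<Rightarrow> ('d::finite) coeffs set" where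
  "Hspace \<rho> m = {U. (\<forall>k. U (k, 0) = 0) \<and>
                    (\<lambda>q. (cmod (U q))\<^sup>2 * weight \<rho> m q) summable_on UNIV}"

definition Omega :: "real \<Rightarrow> real \<Rightarrow> complex set" where
  "Omega \<sigma> \<mu> = {e. Re e \<ge> \<mu> * \<bar>Im e\<bar> \<and> \<sigma> \<le> cmod e \<and> cmod e \<le> 2 * \<sigma>}"

definition Hdiff_within ::
  "real \<Rightarrow> real \<Rightarrow> (complex \<Rightarrow> ('d::finite) coeffs) \<Rightarrow> complex \<Rightarrow> complex set \<Rightarrow> bool" where
  "Hdiff_within \<rho> m U e S \<longleftrightarrow>
     (\<exists>D \<in> Hspace \<rho> m.
        ((\<lambda>h. Hnorm \<rho> m (\<lambda>q. (U (e + h) q - U e q) / h - D q)) \<longlongrightarrow> 0)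
          (at 0 within {h. e + h \<in> S}))"

definition HOmega :: "real \<Rightarrow> real \<Rightarrow> complex set \<Rightarrow> (complex \<Rightarrow> ('d::finite) coeffs) set" where
  "HOmega \<rho> m S = {U. (\<forall>e\<in>S. U e \<in> Hspace \<rho> m) \<and>
                      (\<exists>B. \<forall>e\<in>S. Hnorm \<rho> m (U e) \<le> B) \<and>
                      (\<forall>e\<in>S. Hdiff_within \<rho> m U e S)}"

text \<open>Product of functions = convolution of Fourier coefficients.\<close>
definition conv :: "('d::finite) coeffs \<Rightarrow> 'd coeffs \<Rightarrow> 'd coeffs" where
  "conv U V q = (\<Sum>\<^sub>\<infinity>p. U p * V (fst q - fst p, snd q - snd p))"

definition Nsym :: "real ^ ('d::finite) \<Rightarrow> real \<Rightarrow> complex \<Rightarrow> 'd fidx \<Rightarrow> complex" where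
  "Nsym \<omega> \<beta> e q = - e * (complex_of_real (kdot (fst q) \<omega>))\<^sup>2
                    + \<i> * complex_of_real (kdot (fst q) \<omega>)
                    - e * complex_of_real (\<beta> * (real_of_int (snd q))^4 - (real_of_int (snd q))\<^sup>2)"

text \<open>T_eps(U) = eps N_eps^{-1}[(U^2)_xx + f]; (U^2)_xx has coefficients -j^2 (U*U)_{k,j}.\<close>
definition Tmap :: "real ^ ('d::finite) \<Rightarrow> real \<Rightarrow> 'd coeffs \<Rightarrow> complex \<Rightarrow> 'd coeffs \<Rightarrow> 'd coeffs" where
  "Tmap \<omega> \<beta> f e U q =
     e * ((- (of_int (snd q))\<^sup>2) * conv U U q + f q) / Nsym \<omega> \<beta> e q"

end

theory Submission
  imports Defs "HOL-Library.FuncSet"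
begin

definition l2 :: "('a \<Rightarrow> real) \<Rightarrow> bool" where
  "l2 g \<longleftrightarrow> (\<lambda>x. (g x)\<^sup>2) summable_on UNIV"
definition n2 :: "('a \<Rightarrow> real) \<Rightarrow> real" where
  "n2 g = sqrt (\<Sum>\<^sub>\<infinity>x. (g x)\<^sup>2)"

lemma n2_nonneg: "n2 g \<ge> 0"
  unfolding n2_def by (simp add: infsum_nonneg)

lemma n2_sq: "(n2 g)\<^sup>2 = (\<Sum>\<^sub>\<infinity>x. (g x)\<^sup>2)"
  unfolding n2_def by (simp add: infsum_nonneg)

lemma l2_fin_bound:
  assumes "B \<ge> 0" and "\<And>F. finite F \<Longrightarrow> (\<Sum>x\<in>F. (g x)\<^sup>2) \<le> B\<^sup>2"
  shows "l2 g \<and> n2 g \<le> B"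
proof -
  have s: "(\<lambda>x. (g x)\<^sup>2) summable_on UNIV"
    by (rule nonneg_bdd_above_summable_on) (use assms(2) in \<open>auto simp: bdd_above_def\<close>)
  have "(\<Sum>\<^sub>\<infinity>x. (g x)\<^sup>2) \<le> B\<^sup>2"
    by (rule infsum_le_finite_sums[OF s]) (use assms(2) in auto)
  then have "n2 g \<le> sqrt (B\<^sup>2)" unfolding n2_def by (rule real_sqrt_le_mono)
  then show ?thesis using s assms(1) by (simp add: l2_def)
qed

lemma l2_fin_le:
  assumes "l2 g" "finite F"
  shows "(\<Sum>x\<in>F. (g x)\<^sup>2) \<le> (n2 g)\<^sup>2"
  unfolding n2_sq
  by (rule finite_sum_le_infsum) (use assms in \<open>auto simp: l2_def\<close>)

lemma L2_set_le_n2: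
  assumes "l2 g" "finite F"
  shows "L2_set g F \<le> n2 g"
proof -
  have "L2_set g F = sqrt (\<Sum>x\<in>F. (g x)\<^sup>2)" by (simp add: L2_set_def)
  also have "\<dots> \<le> sqrt ((n2 g)\<^sup>2)" using l2_fin_le[OF assms] by (rule real_sqrt_le_mono)
  also have "\<dots> = n2 g" using n2_nonneg[of g] by simp
  finally show ?thesis .
qed

lemma l2_mono:
  assumes "l2 g'" "\<And>x. \<bar>g x\<bar> \<le> g' x"
  shows "l2 g \<and> n2 g \<le> n2 g'"
proof (rule l2_fin_bound[OF n2_nonneg])
  fix F :: "'a set" assume F: "finite F"
  have "(\<Sum>x\<in>F. (g x)\<^sup>2) \<le> (\<Sum>x\<in>F. (g' x)\<^sup>2)"
  proof (rule sum_mono)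
    fix x show "(g x)\<^sup>2 \<le> (g' x)\<^sup>2"
      using assms(2)[of x] by (metis abs_ge_zero abs_le_square_iff abs_of_nonneg order_trans)
  qed
  also have "\<dots> \<le> (n2 g')\<^sup>2" by (rule l2_fin_le[OF assms(1) F])
  finally show "(\<Sum>x\<in>F. (g x)\<^sup>2) \<le> (n2 g')\<^sup>2" .
qed

lemma l2_add:
  assumes "l2 g1" "l2 g2"
  shows "l2 (\<lambda>x. g1 x + g2 x) \<and> n2 (\<lambda>x. g1 x + g2 x) \<le> n2 g1 + n2 g2"
proof (rule l2_fin_bound)
  show "0 \<le> n2 g1 + n2 g2" using n2_nonneg[of g1] n2_nonneg[of g2] by simp
  fix F :: "'a set" assume F: "finite F"
  have "(\<Sum>x\<in>F. (g1 x + g2 x)\<^sup>2) = (L2_set (\<lambda>x. g1 x + g2 x) F)\<^sup>2"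
    by (simp add: L2_set_def sum_nonneg)
  also have "\<dots> \<le> (n2 g1 + n2 g2)\<^sup>2"
  proof (rule power_mono)
    have "L2_set (\<lambda>x. g1 x + g2 x) F \<le> L2_set g1 F + L2_set g2 F" by (rule L2_set_triangle_ineq)
    also have "\<dots> \<le> n2 g1 + n2 g2"
      using L2_set_le_n2[OF assms(1) F] L2_set_le_n2[OF assms(2) F] by simp
    finally show "L2_set (\<lambda>x. g1 x + g2 x) F \<le> n2 g1 + n2 g2" .
  qed simp
  finally show "(\<Sum>x\<in>F. (g1 x + g2 x)\<^sup>2) \<le> (n2 g1 + n2 g2)\<^sup>2" .
qed

lemma l2_scale:
  assumes "l2 g"
  shows "l2 (\<lambda>x. c * g x) \<and> n2 (\<lambda>x. c * g x) = \<bar>c\<bar> * n2 g"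
proof -
  have e: "(\<lambda>x. (c * g x)\<^sup>2) = (\<lambda>x. c\<^sup>2 * (g x)\<^sup>2)" by (simp add: power_mult_distrib)
  have s: "(\<lambda>x. (g x)\<^sup>2) summable_on UNIV" using assms by (simp add: l2_def)
  have "l2 (\<lambda>x. c * g x)" unfolding l2_def e by (rule summable_on_cmult_right[OF s])
  moreover have "n2 (\<lambda>x. c * g x) = sqrt (c\<^sup>2 * (\<Sum>\<^sub>\<infinity>x. (g x)\<^sup>2))"
    unfolding n2_def e by (simp add: infsum_cmult_right[OF s])
  then have "n2 (\<lambda>x. c * g x) = \<bar>c\<bar> * n2 g" by (simp add: n2_def real_sqrt_mult)
  ultimately show ?thesis by simp
qed

lemma l2_abs: "l2 (\<lambda>x. \<bar>g x\<bar>) = l2 g" "n2 (\<lambda>x. \<bar>g x\<bar>) = n2 g"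
  by (simp_all add: l2_def n2_def)

lemma l2_bounded:
  assumes "l2 g" shows "\<bar>g x\<bar> \<le> n2 g"
proof -
  have "(\<Sum>y\<in>{x}. (g y)\<^sup>2) \<le> (n2 g)\<^sup>2" by (rule l2_fin_le[OF assms]) simp
  then have "(g x)\<^sup>2 \<le> (n2 g)\<^sup>2" by simp
  then show ?thesis using n2_nonneg[of g] by (metis abs_le_square_iff abs_of_nonneg)
qed

lemma l2_CS:
  assumes "l2 a" "l2 b"
  shows "(\<lambda>x. \<bar>a x * b x\<bar>) summable_on UNIV \<and> (\<Sum>\<^sub>\<infinity>x. \<bar>a x * b x\<bar>) \<le> n2 a * n2 b"
proof -
  have fin: "(\<Sum>x\<in>F. \<bar>a x * b x\<bar>) \<le> n2 a * n2 b" if F: "finite F" for F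
  proof -
    have "(\<Sum>x\<in>F. \<bar>a x * b x\<bar>) = (\<Sum>x\<in>F. \<bar>a x\<bar> * \<bar>b x\<bar>)" by (simp add: abs_mult)
    also have "\<dots> \<le> L2_set a F * L2_set b F" by (rule L2_set_mult_ineq)
    also have "\<dots> \<le> n2 a * n2 b"
      using L2_set_le_n2[OF assms(1) F] L2_set_le_n2[OF assms(2) F] n2_nonneg[of a]
      by (intro mult_mono) auto
    finally show ?thesis .
  qed
  have s: "(\<lambda>x. \<bar>a x * b x\<bar>) summable_on UNIV"
    by (rule nonneg_bdd_above_summable_on) (use fin in \<open>auto simp: bdd_above_def\<close>)
  show ?thesis using s by (auto intro: infsum_le_finite_sums[OF s] fin)
qed


lemma summable_on_diff':
  fixes f g :: "'a \<Rightarrow> 'b::{topological_ab_group_add}"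
  assumes "f summable_on A" "g summable_on A"
  shows "(\<lambda>x. f x - g x) summable_on A"
  using summable_on_add[OF assms(1) summable_on_uminus[THEN iffD2, OF assms(2)]] by simp

lemma infsum_diff':
  fixes f g :: "'a \<Rightarrow> 'b::{topological_ab_group_add, t2_space}"
  assumes "f summable_on A" "g summable_on A"
  shows "infsum (\<lambda>x. f x - g x) A = infsum f A - infsum g A"
  using infsum_add[OF assms(1) summable_on_uminus[THEN iffD2, OF assms(2)]]
  by (simp add: infsum_uminus)

lemma summable_on_sum':
  fixes f :: "'i \<Rightarrow> 'a \<Rightarrow> 'b::{topological_comm_monoid_add}"
  assumes "finite I" "\<And>i. i \<in> I \<Longrightarrow> f i summable_on A"
  shows "(\<lambda>x. \<Sum>i\<in>I. f i x) summable_on A"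
  using assms by (induction I rule: finite_induct) (auto intro: summable_on_add)

lemma infsum_sum':
  fixes f :: "'i \<Rightarrow> 'a \<Rightarrow> 'b::{topological_comm_monoid_add, t2_space}"
  assumes "finite I" "\<And>i. i \<in> I \<Longrightarrow> f i summable_on A"
  shows "infsum (\<lambda>x. \<Sum>i\<in>I. f i x) A = (\<Sum>i\<in>I. infsum (f i) A)"
  using assms
proof (induction I rule: finite_induct)
  case (insert i I)
  have "infsum (\<lambda>x. \<Sum>i\<in>insert i I. f i x) A = infsum (\<lambda>x. f i x + (\<Sum>i\<in>I. f i x)) A"
    using insert.hyps by simp
  also have "\<dots> = infsum (f i) A + infsum (\<lambda>x. \<Sum>i\<in>I. f i x) A"
    by (rule infsum_add) (use insert in \<open>auto intro: summable_on_sum'\<close>)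
  finally show ?case using insert by simp
qed simp

definition sh :: "'d::finite fidx \<Rightarrow> 'd fidx \<Rightarrow> 'd fidx" where
  "sh q p = (fst q - fst p, snd q - snd p)"

lemma sh_sh[simp]: "sh q (sh q p) = p"
  by (simp add: sh_def)

lemma bij_sh: "bij (sh q)"
  by (metis bijI' sh_sh)

lemma inj_sh: "inj (sh q)"
  using bij_sh bij_is_inj by blast

lemma range_sh: "range (sh q) = UNIV"
  using bij_sh bij_is_surj by blast

lemma shift_summable:
  fixes g :: "'d::finite fidx \<Rightarrow> 'b::{topological_comm_monoid_add}"
  assumes "g summable_on UNIV"
  shows "(\<lambda>p. g (sh q p)) summable_on UNIV"
proof -
  have "g summable_on (sh q ` UNIV)" using assms range_sh[of q] by simp
  then show ?thesis using summable_on_reindex[OF inj_sh[of q], of g] by (simp add: o_def)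
qed

lemma shift_infsum:
  fixes g :: "'d::finite fidx \<Rightarrow> 'b::{topological_comm_monoid_add, t2_space}"
  shows "(\<Sum>\<^sub>\<infinity>p. g (sh q p)) = (\<Sum>\<^sub>\<infinity>p. g p)"
proof -
  have "infsum g (sh q ` UNIV) = infsum (g \<circ> sh q) UNIV" by (rule infsum_reindex[OF inj_sh])
  then show ?thesis using range_sh[of q] by (simp add: o_def)
qed

lemma young:
  fixes A B :: "'d::finite fidx \<Rightarrow> real"
  assumes A0: "\<And>p. A p \<ge> 0" and B0: "\<And>p. B p \<ge> 0"
    and lA: "l2 A" and sB: "B summable_on UNIV"
  shows "(\<forall>q. (\<lambda>p. A p * B (sh q p)) summable_on UNIV) \<and>
         l2 (\<lambda>q. \<Sum>\<^sub>\<infinity>p. A p * B (sh q p)) \<and>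
         n2 (\<lambda>q. \<Sum>\<^sub>\<infinity>p. A p * B (sh q p)) \<le> n2 A * (\<Sum>\<^sub>\<infinity>p. B p)"
proof -
  define Bs where "Bs = (\<Sum>\<^sub>\<infinity>p. B p)"
  have Bs0: "Bs \<ge> 0" unfolding Bs_def by (simp add: infsum_nonneg B0)
  have sBq: "(\<lambda>p. B (sh q p)) summable_on UNIV" for q by (rule shift_summable[OF sB])
  have sBqi: "(\<Sum>\<^sub>\<infinity>p. B (sh q p)) = Bs" for q unfolding Bs_def by (rule shift_infsum)
  have Abd: "A p \<le> n2 A" for p using l2_bounded[OF lA, of p] A0[of p] by simp
  have sA2B: "(\<lambda>p. (A p)\<^sup>2 * B (sh q p)) summable_on UNIV" for q
  proof (rule summable_on_comparison_test)
    show "(\<lambda>p. (n2 A)\<^sup>2 * B (sh q p)) summable_on UNIV" by (rule summable_on_cmult_right[OF sBq])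
    fix p show "(A p)\<^sup>2 * B (sh q p) \<le> (n2 A)\<^sup>2 * B (sh q p)"
      using Abd[of p] A0[of p] B0[of "sh q p"] by (intro mult_right_mono power_mono) auto
    show "0 \<le> (A p)\<^sup>2 * B (sh q p)" using B0[of "sh q p"] by simp
  qed
  have inner: "(\<lambda>p. A p * B (sh q p)) summable_on UNIV \<and>
      (\<Sum>\<^sub>\<infinity>p. A p * B (sh q p))\<^sup>2 \<le> Bs * (\<Sum>\<^sub>\<infinity>p. (A p)\<^sup>2 * B (sh q p))" for q
  proof -
    define a where "a p = A p * sqrt (B (sh q p))" for p
    define b where "b p = sqrt (B (sh q p))" for p
    have a2: "(a p)\<^sup>2 = (A p)\<^sup>2 * B (sh q p)" for p
      unfolding a_def using B0[of "sh q p"] by (simp add: power_mult_distrib)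
    have b2: "(b p)\<^sup>2 = B (sh q p)" for p
      unfolding b_def using B0[of "sh q p"] by simp
    have la: "l2 a" unfolding l2_def a2 by (rule sA2B)
    have lb: "l2 b" unfolding l2_def b2 by (rule sBq)
    have ab: "\<bar>a p * b p\<bar> = A p * B (sh q p)" for p
      unfolding a_def b_def using A0[of p] B0[of "sh q p"]
      by (simp add: abs_mult mult.assoc)
    from l2_CS[OF la lb] have cs: "(\<lambda>p. A p * B (sh q p)) summable_on UNIV"
       "(\<Sum>\<^sub>\<infinity>p. A p * B (sh q p)) \<le> n2 a * n2 b" by (simp_all add: ab)
    have "(\<Sum>\<^sub>\<infinity>p. A p * B (sh q p))\<^sup>2 \<le> (n2 a * n2 b)\<^sup>2"
      using cs(2) by (intro power_mono) (auto intro: infsum_nonneg simp: A0 B0)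
    also have "\<dots> = (\<Sum>\<^sub>\<infinity>p. (A p)\<^sup>2 * B (sh q p)) * Bs"
      by (simp add: power_mult_distrib n2_sq a2 b2 sBqi)
    finally show ?thesis using cs(1) by (simp add: mult.commute)
  qed
  have fin: "(\<Sum>q\<in>F. (\<Sum>\<^sub>\<infinity>p. A p * B (sh q p))\<^sup>2) \<le> (n2 A * Bs)\<^sup>2" if F: "finite F" for F
  proof -
    have "(\<Sum>q\<in>F. (\<Sum>\<^sub>\<infinity>p. A p * B (sh q p))\<^sup>2) \<le> (\<Sum>q\<in>F. Bs * (\<Sum>\<^sub>\<infinity>p. (A p)\<^sup>2 * B (sh q p)))"
      by (rule sum_mono) (use inner in blast)
    also have "\<dots> = Bs * (\<Sum>\<^sub>\<infinity>p. \<Sum>q\<in>F. (A p)\<^sup>2 * B (sh q p))"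
      by (simp add: infsum_sum'[OF F sA2B] sum_distrib_left)
    also have "\<dots> \<le> Bs * (\<Sum>\<^sub>\<infinity>p. (A p)\<^sup>2 * Bs)"
    proof (intro mult_left_mono Bs0 infsum_mono)
      show "(\<lambda>p. \<Sum>q\<in>F. (A p)\<^sup>2 * B (sh q p)) summable_on UNIV"
        by (rule summable_on_sum'[OF F sA2B])
      show "(\<lambda>p. (A p)\<^sup>2 * Bs) summable_on UNIV"
        using lA by (simp add: l2_def summable_on_cmult_left)
      fix p
      have "(\<Sum>q\<in>F. B (sh q p)) \<le> Bs"
      proof -
        have "(\<Sum>q\<in>F. B (sh q p)) = (\<Sum>r\<in>(\<lambda>q. sh q p) ` F. B r)"
        proof (rule sum.reindex[symmetric, unfolded o_def])
          show "inj_on (\<lambda>q. sh q p) F" by (rule inj_onI) (auto simp: sh_def prod_eq_iff)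
        qed
        also have "\<dots> \<le> Bs" unfolding Bs_def
          by (rule finite_sum_le_infsum[OF sB]) (use F B0 in auto)
        finally show ?thesis .
      qed
      then show "(\<Sum>q\<in>F. (A p)\<^sup>2 * B (sh q p)) \<le> (A p)\<^sup>2 * Bs"
        by (simp add: sum_distrib_left[symmetric] mult_left_mono)
    qed
    also have "\<dots> = (n2 A * Bs)\<^sup>2"
      using n2_sq[of A] by (simp add: infsum_cmult_left' power_mult_distrib power2_eq_square)
    finally show ?thesis .
  qed
  have "l2 (\<lambda>q. \<Sum>\<^sub>\<infinity>p. A p * B (sh q p)) \<and> n2 (\<lambda>q. \<Sum>\<^sub>\<infinity>p. A p * B (sh q p)) \<le> n2 A * Bs"
    by (rule l2_fin_bound) (use fin Bs0 n2_nonneg[of A] in auto)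
  then show ?thesis using inner unfolding Bs_def by blast
qed


definition hh :: "int \<Rightarrow> real" where "hh n = 1 / (1 + (real_of_int n)\<^sup>2)"

lemma hh_pos: "hh n > 0" unfolding hh_def by (simp add: add_pos_nonneg)

lemma hh_nat_summable: "summable (\<lambda>n::nat. 1 / (1 + (real n)\<^sup>2))"
proof (rule summable_comparison_test')
  show "summable (\<lambda>n::nat. 2 * inverse (real (Suc n) ^ 2))"
    apply (rule summable_mult)
    apply (subst summable_Suc_iff[where f="\<lambda>n. inverse (real n ^ 2)"])
    apply (rule inverse_power_summable) by simp
  fix n :: nat
  have "(real (Suc n))\<^sup>2 \<le> 2 * (1 + (real n)\<^sup>2)"
  proof -
    have "0 \<le> (real n - 1)\<^sup>2" by simp
    then show ?thesis by (simp add: power2_eq_square algebra_simps)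
  qed
  then show "norm (1 / (1 + (real n)\<^sup>2)) \<le> 2 * inverse (real (Suc n) ^ 2)"
    by (simp add: field_simps add_pos_nonneg)
qed

lemma hh_summable: "hh summable_on (UNIV::int set)"
proof -
  have s1: "(\<lambda>n::nat. 1 / (1 + (real n)\<^sup>2)) summable_on UNIV"
    by (rule summable_nonneg_imp_summable_on[OF hh_nat_summable]) (simp add: add_pos_nonneg)
  have A: "hh summable_on (range int)"
    using summable_on_reindex[of int UNIV hh] s1 by (simp add: o_def hh_def)
  have s2: "(\<lambda>n::nat. hh (- int n)) summable_on UNIV"
    using s1 by (simp add: hh_def)
  have B: "hh summable_on (range (\<lambda>n::nat. - int n))"
    using summable_on_reindex[of "\<lambda>n::nat. - int n" UNIV hh] s2 by (simp add: o_def inj_def)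
  have U: "range int \<union> range (\<lambda>n::nat. - int n) = (UNIV::int set)"
  proof -
    have "x \<in> range int \<union> range (\<lambda>n::nat. - int n)" for x :: int
    proof (cases "x \<ge> 0")
      case True then show ?thesis by (metis UnI1 nonneg_int_cases rangeI)
    next
      case False then have "x = - int (nat (-x))" by simp
      then show ?thesis by (metis UnI2 rangeI)
    qed
    then show ?thesis by blast
  qed
  show ?thesis using summable_on_union[OF A B] U by simp
qed

definition Pw :: "'d::finite fidx \<Rightarrow> real" where
  "Pw q = sqnorm (fst q) + (real_of_int (snd q))\<^sup>2 + 1"

lemma sqnorm_nonneg: "sqnorm k \<ge> 0" unfolding sqnorm_def by (simp add: sum_nonneg)

lemma Pw_ge1: "Pw q \<ge> 1" unfolding Pw_def using sqnorm_nonneg[of "fst q"] by simp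

lemma Pw_prod_bound:
  fixes q :: "'d::finite fidx"
  assumes "m \<ge> real CARD('d) + 1"
  shows "Pw q powr (-m) \<le> (\<Prod>i\<in>UNIV. hh (fst q $ i)) * hh (snd q)"
proof -
  have P1: "Pw q \<ge> 1" by (rule Pw_ge1)
  have "Pw q powr (-m) \<le> Pw q powr (- (real CARD('d) + 1))"
    using P1 assms by (intro powr_mono) auto
  also have "\<dots> = 1 / Pw q ^ (CARD('d) + 1)"
  proof -
    have e1: "real CARD('d) + 1 = real (CARD('d) + 1)" by simp
    have "Pw q powr (- (real CARD('d) + 1)) = inverse (Pw q powr (real (CARD('d) + 1)))"
      unfolding e1 by (rule powr_minus)
    also have "\<dots> = inverse (Pw q ^ (CARD('d) + 1))" using P1 by (subst powr_realpow) auto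
    finally show ?thesis by (simp add: divide_inverse)
  qed
  also have "\<dots> \<le> 1 / ((\<Prod>i\<in>UNIV. 1 + (real_of_int (fst q $ i))\<^sup>2) * (1 + (real_of_int (snd q))\<^sup>2))"
  proof (rule divide_left_mono)
    have c: "(1 + (real_of_int (fst q $ i))\<^sup>2) \<le> Pw q" for i
    proof -
      have "(real_of_int (fst q $ i))\<^sup>2 \<le> sqnorm (fst q)"
        unfolding sqnorm_def by (rule member_le_sum) auto
      then show ?thesis unfolding Pw_def using zero_le_power2[of "real_of_int (snd q)"] by linarith
    qed
    have "(\<Prod>i\<in>UNIV. 1 + (real_of_int (fst q $ i))\<^sup>2) \<le> (\<Prod>i\<in>(UNIV::'d set). Pw q)"
      by (rule prod_mono) (use c in \<open>auto simp: add_nonneg_nonneg\<close>)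
    also have "\<dots> = Pw q ^ CARD('d)" by simp
    finally have a: "(\<Prod>i\<in>UNIV. 1 + (real_of_int (fst q $ i))\<^sup>2) \<le> Pw q ^ CARD('d)" .
    have b: "1 + (real_of_int (snd q))\<^sup>2 \<le> Pw q" unfolding Pw_def using sqnorm_nonneg[of "fst q"] by simp
    show "(\<Prod>i\<in>UNIV. 1 + (real_of_int (fst q $ i))\<^sup>2) * (1 + (real_of_int (snd q))\<^sup>2) \<le> Pw q ^ (CARD('d) + 1)"
    proof -
      have "(\<Prod>i\<in>UNIV. 1 + (real_of_int (fst q $ i))\<^sup>2) * (1 + (real_of_int (snd q))\<^sup>2) \<le> Pw q ^ CARD('d) * Pw q"
        by (rule mult_mono[OF a b]) (use P1 in auto)
      then show ?thesis by (simp only: Suc_eq_plus1[symmetric] power_Suc2)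
    qed
    show "0 < Pw q ^ (CARD('d) + 1) * ((\<Prod>i\<in>UNIV. 1 + (real_of_int (fst q $ i))\<^sup>2) * (1 + (real_of_int (snd q))\<^sup>2))"
      using P1 by (intro mult_pos_pos prod_pos) (auto simp: add_pos_nonneg)
  qed simp
  also have "\<dots> = (\<Prod>i\<in>UNIV. hh (fst q $ i)) * hh (snd q)"
    by (simp add: hh_def prod_dividef)
  finally show ?thesis .
qed

lemma vec_box_sum:
  assumes "finite S"
  shows "(\<Sum>k\<in>{k::int^'d::finite. \<forall>i. k $ i \<in> S}. \<Prod>i\<in>UNIV. hh (k $ i)) = (\<Sum>n\<in>S. hh n) ^ CARD('d)"
proof -
  have im: "{k::int^'d. \<forall>i. k $ i \<in> S} = vec_lambda ` (PiE UNIV (\<lambda>_. S))"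
  proof
    show "{k::int^'d. \<forall>i. k $ i \<in> S} \<subseteq> vec_lambda ` (PiE UNIV (\<lambda>_. S))"
    proof
      fix k :: "int^'d" assume "k \<in> {k. \<forall>i. k $ i \<in> S}"
      then have "vec_nth k \<in> PiE UNIV (\<lambda>_. S)" by auto
      then show "k \<in> vec_lambda ` (PiE UNIV (\<lambda>_. S))" by (metis image_eqI vec_nth_inverse)
    qed
  qed auto
  have inj: "inj_on (vec_lambda :: ('d \<Rightarrow> int) \<Rightarrow> int^'d) (PiE UNIV (\<lambda>_. S))"
    by (rule inj_onI) (metis vec_lambda_inverse UNIV_I)
  have "(\<Sum>k\<in>{k::int^'d. \<forall>i. k $ i \<in> S}. \<Prod>i\<in>UNIV. hh (k $ i))
       = (\<Sum>g\<in>PiE (UNIV::'d set) (\<lambda>_. S). \<Prod>i\<in>UNIV. hh (g i))"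
  proof -
    have "bij_betw vec_nth {k::int^'d. \<forall>i. k $ i \<in> S} (PiE UNIV (\<lambda>_. S))"
      unfolding bij_betw_def
    proof
      show "inj_on vec_nth {k::int^'d. \<forall>i. k $ i \<in> S}" by (rule inj_onI) (simp add: vec_eq_iff)
      show "vec_nth ` {k::int^'d. \<forall>i. k $ i \<in> S} = PiE UNIV (\<lambda>_. S)"
      proof
        show "PiE UNIV (\<lambda>_. S) \<subseteq> vec_nth ` {k::int^'d. \<forall>i. k $ i \<in> S}"
        proof
          fix g :: "'d \<Rightarrow> int" assume "g \<in> PiE UNIV (\<lambda>_. S)"
          then have "vec_lambda g \<in> {k::int^'d. \<forall>i. k $ i \<in> S}" "vec_nth (vec_lambda g) = g" by auto
          then show "g \<in> vec_nth ` {k::int^'d. \<forall>i. k $ i \<in> S}" by (metis image_eqI)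
        qed
      qed auto
    qed
    from sum.reindex_bij_betw[OF this, of "\<lambda>g. \<Prod>i\<in>UNIV. hh (g i)"] show ?thesis by simp
  qed
  also have "\<dots> = (\<Prod>i\<in>(UNIV::'d set). \<Sum>n\<in>S. hh n)"
    by (rule prod_sum_PiE[symmetric]) (use assms in auto)
  also have "\<dots> = (\<Sum>n\<in>S. hh n) ^ CARD('d)" by simp
  finally show ?thesis .
qed

lemma lattice_summable:
  assumes "m \<ge> real CARD('d::finite) + 1"
  shows "(\<lambda>q::'d fidx. Pw q powr (-m)) summable_on UNIV"
proof -
  define g where "g q = (\<Prod>i\<in>UNIV. hh (fst q $ i)) * hh (snd q)" for q :: "'d fidx"
  define H where "H = (\<Sum>\<^sub>\<infinity>n. hh n)"
  have g0: "g q \<ge> 0" for q unfolding g_def by (simp add: prod_nonneg hh_pos less_imp_le)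
  have fin: "(\<Sum>q\<in>F. g q) \<le> H ^ CARD('d) * H" if F: "finite F" for F
  proof -
    define S where "S = snd ` F \<union> (\<Union>i. (\<lambda>q. fst q $ i) ` F)"
    have S: "finite S" unfolding S_def using F by auto
    define Bk where "Bk = {k::int^'d. \<forall>i. k $ i \<in> S}"
    have Bkfin: "finite Bk"
    proof -
      have "Bk = vec_lambda ` (PiE UNIV (\<lambda>_. S))"
      proof
        show "Bk \<subseteq> vec_lambda ` (PiE UNIV (\<lambda>_. S))"
        proof
          fix k :: "int^'d" assume "k \<in> Bk"
          then have "vec_nth k \<in> PiE UNIV (\<lambda>_. S)" by (auto simp: Bk_def)
          then show "k \<in> vec_lambda ` (PiE UNIV (\<lambda>_. S))" by (metis image_eqI vec_nth_inverse)
        qed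
      qed (auto simp: Bk_def)
      then show ?thesis using S by (simp add: finite_PiE)
    qed
    have sub: "F \<subseteq> Bk \<times> S" unfolding Bk_def S_def by force
    have "(\<Sum>q\<in>F. g q) \<le> (\<Sum>q\<in>Bk \<times> S. g q)"
      by (rule sum_mono2) (use Bkfin S sub g0 in auto)
    also have "\<dots> = (\<Sum>k\<in>Bk. \<Prod>i\<in>UNIV. hh (k $ i)) * (\<Sum>n\<in>S. hh n)"
    proof -
      have "(\<Sum>q\<in>Bk \<times> S. g q) = (\<Sum>k\<in>Bk. \<Sum>j\<in>S. g (k, j))"
        by (simp add: sum.cartesian_product case_prod_unfold)
      then show ?thesis unfolding g_def by (simp add: sum_product)
    qed
    also have "\<dots> = (\<Sum>n\<in>S. hh n) ^ CARD('d) * (\<Sum>n\<in>S. hh n)"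
      unfolding Bk_def by (simp add: vec_box_sum[OF S])
    also have "\<dots> \<le> H ^ CARD('d) * H"
    proof -
      have le: "(\<Sum>n\<in>S. hh n) \<le> H" unfolding H_def
        by (rule finite_sum_le_infsum[OF hh_summable S]) (auto simp: hh_pos less_imp_le)
      have nn: "0 \<le> (\<Sum>n\<in>S. hh n)" by (simp add: sum_nonneg hh_pos less_imp_le)
      show ?thesis by (intro mult_mono power_mono le nn) (use nn le in auto)
    qed
    finally show ?thesis .
  qed
  have sg: "g summable_on UNIV"
    by (rule nonneg_bdd_above_summable_on) (use g0 fin in \<open>auto simp: bdd_above_def\<close>)
  show ?thesis
    by (rule summable_on_comparison_test[OF sg]) (use Pw_prod_bound[OF assms] in \<open>auto simp: g_def\<close>)
qed


definition L1 :: "'d::finite fidx \<Rightarrow> real" where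
  "L1 q = l1norm (fst q) + \<bar>real_of_int (snd q)\<bar>"
definition ex :: "real \<Rightarrow> 'd::finite fidx \<Rightarrow> real" where
  "ex \<rho> q = exp (\<rho> * L1 q)"
definition sw :: "real \<Rightarrow> real \<Rightarrow> 'd::finite fidx \<Rightarrow> real" where
  "sw \<rho> m q = ex \<rho> q * Pw q powr (m / 2)"

lemma l1norm_nonneg: "l1norm k \<ge> 0" unfolding l1norm_def by (simp add: sum_nonneg)
lemma L1_nonneg: "L1 q \<ge> 0" unfolding L1_def using l1norm_nonneg[of "fst q"] by simp

lemma ex_pos: "ex \<rho> q > 0" unfolding ex_def by simp
lemma ex_ge1: "\<rho> \<ge> 0 \<Longrightarrow> ex \<rho> q \<ge> 1" unfolding ex_def using L1_nonneg[of q] by simp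
lemma Pw_powr_ge1: "m \<ge> 0 \<Longrightarrow> Pw q powr (m/2) \<ge> 1"
  using Pw_ge1[of q] by (simp add: ge_one_powr_ge_zero)
lemma sw_pos: "sw \<rho> m q > 0" unfolding sw_def using ex_pos[of \<rho> q] Pw_ge1[of q] by simp
lemma ex_le_sw: "m \<ge> 0 \<Longrightarrow> ex \<rho> q \<le> sw \<rho> m q"
  unfolding sw_def using ex_pos[of \<rho> q] Pw_powr_ge1[of m q] by simp
lemma sw_ge1: "\<rho> \<ge> 0 \<Longrightarrow> m \<ge> 0 \<Longrightarrow> sw \<rho> m q \<ge> 1"
  using ex_le_sw[of m \<rho> q] ex_ge1[of \<rho> q] by simp

lemma weight_sw: "weight \<rho> m q = (sw \<rho> m q)\<^sup>2"
proof -
  have "(sw \<rho> m q)\<^sup>2 = (ex \<rho> q)\<^sup>2 * (Pw q powr (m/2))\<^sup>2" unfolding sw_def by (simp add: power_mult_distrib)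
  also have "(ex \<rho> q)\<^sup>2 = exp (2 * \<rho> * L1 q)" unfolding ex_def
    by (simp add: power2_eq_square exp_add[symmetric])
  also have "(Pw q powr (m/2))\<^sup>2 = Pw q powr m"
    using Pw_ge1[of q] by (simp add: power2_eq_square powr_add[symmetric])
  finally show ?thesis by (simp add: weight_def L1_def Pw_def)
qed

lemma L1_sub: "L1 q \<le> L1 p + L1 (sh q p)"
proof -
  have "l1norm (fst q) \<le> l1norm (fst p) + l1norm (fst q - fst p)"
    unfolding l1norm_def sum.distrib[symmetric] by (rule sum_mono) auto
  then show ?thesis unfolding L1_def sh_def by auto
qed

lemma Pw_sub: "Pw q \<le> 2 * Pw p + 2 * Pw (sh q p)"
proof -
  have a: "(x::real)\<^sup>2 \<le> 2 * y\<^sup>2 + 2 * (x - y)\<^sup>2" for x y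
  proof -
    have "0 \<le> (x - 2*y)\<^sup>2" by simp
    then show ?thesis by (simp add: power2_eq_square algebra_simps)
  qed
  have "sqnorm (fst q) \<le> 2 * sqnorm (fst p) + 2 * sqnorm (fst q - fst p)"
    unfolding sqnorm_def sum_distrib_left sum.distrib[symmetric] by (rule sum_mono) (use a in auto)
  moreover have "(real_of_int (snd q))\<^sup>2 \<le> 2 * (real_of_int (snd p))\<^sup>2 + 2 * (real_of_int (snd q - snd p))\<^sup>2"
    using a[of "real_of_int (snd q)" "real_of_int (snd p)"] by simp
  ultimately show ?thesis unfolding Pw_def sh_def by simp
qed

lemma powr_half_sub:
  fixes a b c m :: real
  assumes "m \<ge> 0" "a \<ge> 1" "b \<ge> 1" "c \<ge> 1" "c \<le> 2 * a + 2 * b"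
  shows "c powr (m/2) \<le> 2 powr m * (a powr (m/2) + b powr (m/2))"
proof -
  define M where "M = max a b"
  have M1: "M \<ge> 1" using assms unfolding M_def by simp
  have "c powr (m/2) \<le> (4 * M) powr (m/2)"
    using assms by (intro powr_mono2) (auto simp: M_def)
  also have "\<dots> = 4 powr (m/2) * M powr (m/2)" using M1 by (simp add: powr_mult)
  also have "4 powr (m/2) = 2 powr m"
  proof -
    have "(4::real) = 2 powr 2" by simp
    then have "(4::real) powr (m/2) = 2 powr (2 * (m/2))" by (metis powr_powr)
    then show ?thesis by simp
  qed
  also have "M powr (m/2) \<le> a powr (m/2) + b powr (m/2)"
    unfolding M_def by (cases "a \<le> b") (auto simp: max_def)
  then have "2 powr m * M powr (m/2) \<le> 2 powr m * (a powr (m/2) + b powr (m/2))" by simp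
  finally show ?thesis by simp
qed

lemma sw_sub:
  assumes "m \<ge> 0" "\<rho> \<ge> 0"
  shows "sw \<rho> m q \<le> 2 powr m * (sw \<rho> m p * ex \<rho> (sh q p) + ex \<rho> p * sw \<rho> m (sh q p))"
proof -
  have e: "ex \<rho> q \<le> ex \<rho> p * ex \<rho> (sh q p)"
    unfolding ex_def exp_add[symmetric] using L1_sub[of q p] assms(2)
    by (simp add: mult_left_mono distrib_left[symmetric])
  have P: "Pw q powr (m/2) \<le> 2 powr m * (Pw p powr (m/2) + Pw (sh q p) powr (m/2))"
    by (rule powr_half_sub) (use assms Pw_ge1[of p] Pw_ge1[of "sh q p"] Pw_ge1[of q] Pw_sub[of q p] in auto)
  have "sw \<rho> m q \<le> (ex \<rho> p * ex \<rho> (sh q p)) * (2 powr m * (Pw p powr (m/2) + Pw (sh q p) powr (m/2)))"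
    unfolding sw_def by (rule mult_mono[OF e P]) (use ex_pos[of \<rho> p] ex_pos[of \<rho> "sh q p"] in auto)
  also have "\<dots> = 2 powr m * (sw \<rho> m p * ex \<rho> (sh q p) + ex \<rho> p * sw \<rho> m (sh q p))"
    unfolding sw_def by (simp add: algebra_simps)
  finally show ?thesis .
qed


lemma l1_bound:
  fixes x :: "'d::finite fidx \<Rightarrow> real"
  assumes m: "m \<ge> real CARD('d) + 1" and r: "\<rho> \<ge> 0" and x0: "\<And>p. x p \<ge> 0"
    and lx: "l2 (\<lambda>p. x p * sw \<rho> m p)"
  shows "(\<lambda>p. x p * ex \<rho> p) summable_on UNIV \<and>
         (\<Sum>\<^sub>\<infinity>p. x p * ex \<rho> p) \<le> n2 (\<lambda>p. x p * sw \<rho> m p) * sqrt (\<Sum>\<^sub>\<infinity>q::'d fidx. Pw q powr (-m))"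
proof -
  define b where "b p = Pw p powr (-m/2)" for p :: "'d fidx"
  have b2: "(b p)\<^sup>2 = Pw p powr (-m)" for p
    unfolding b_def using Pw_ge1[of p] by (simp add: power2_eq_square powr_add[symmetric])
  have lb: "l2 b" unfolding l2_def b2 by (rule lattice_summable[OF m])
  have nb: "n2 b = sqrt (\<Sum>\<^sub>\<infinity>q::'d fidx. Pw q powr (-m))" unfolding n2_def b2 ..
  have eq: "\<bar>x p * sw \<rho> m p * b p\<bar> = x p * ex \<rho> p" for p
  proof -
    have "Pw p powr (m/2) * Pw p powr (-m/2) = 1"
      using Pw_ge1[of p] by (simp add: powr_add[symmetric])
    then have "sw \<rho> m p * b p = ex \<rho> p" unfolding sw_def b_def by (simp add: mult.assoc)
    then show ?thesis using x0[of p] ex_pos[of \<rho> p] by (simp add: mult.assoc abs_mult)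
  qed
  from l2_CS[OF lx lb] show ?thesis unfolding eq nb by simp
qed

lemma conv_real:
  fixes x y :: "'d::finite fidx \<Rightarrow> real"
  assumes m: "m \<ge> real CARD('d) + 1" and r: "\<rho> \<ge> 0" and x0: "\<And>p. x p \<ge> 0" and y0: "\<And>p. y p \<ge> 0"
    and lx: "l2 (\<lambda>p. x p * sw \<rho> m p)" and ly: "l2 (\<lambda>p. y p * sw \<rho> m p)"
  shows "(\<forall>q. (\<lambda>p. x p * y (sh q p)) summable_on UNIV) \<and>
         l2 (\<lambda>q. (\<Sum>\<^sub>\<infinity>p. x p * y (sh q p)) * sw \<rho> m q) \<and>
         n2 (\<lambda>q. (\<Sum>\<^sub>\<infinity>p. x p * y (sh q p)) * sw \<rho> m q)
           \<le> 2 * 2 powr m * sqrt (\<Sum>\<^sub>\<infinity>q::'d fidx. Pw q powr (-m)) * n2 (\<lambda>p. x p * sw \<rho> m p) * n2 (\<lambda>p. y p * sw \<rho> m p)"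
proof -
  define SS where "SS = sqrt (\<Sum>\<^sub>\<infinity>q::'d fidx. Pw q powr (-m))"
  have m0: "m \<ge> 0" using m by simp
  define A1 where "A1 p = x p * sw \<rho> m p" for p
  define B1 where "B1 p = y p * ex \<rho> p" for p
  define A2 where "A2 p = y p * sw \<rho> m p" for p
  define B2 where "B2 p = x p * ex \<rho> p" for p
  have A10: "A1 p \<ge> 0" "A2 p \<ge> 0" "B1 p \<ge> 0" "B2 p \<ge> 0" for p
    unfolding A1_def A2_def B1_def B2_def using x0[of p] y0[of p] sw_pos[of \<rho> m p] ex_pos[of \<rho> p] by auto
  from l1_bound[OF m r y0 ly] have sB1: "B1 summable_on UNIV" and iB1: "(\<Sum>\<^sub>\<infinity>p. B1 p) \<le> n2 A2 * SS"
    unfolding B1_def A2_def SS_def by auto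
  from l1_bound[OF m r x0 lx] have sB2: "B2 summable_on UNIV" and iB2: "(\<Sum>\<^sub>\<infinity>p. B2 p) \<le> n2 A1 * SS"
    unfolding B2_def A1_def SS_def by auto
  have lA1: "l2 A1" using lx unfolding A1_def .
  have lA2: "l2 A2" using ly unfolding A2_def .
  note Y1 = young[of A1 B1, OF A10(1) A10(3) lA1 sB1]
  note Y2 = young[of A2 B2, OF A10(2) A10(4) lA2 sB2]
  define Y1f where "Y1f q = (\<Sum>\<^sub>\<infinity>p. A1 p * B1 (sh q p))" for q
  define Y2f where "Y2f q = (\<Sum>\<^sub>\<infinity>p. A2 p * B2 (sh q p))" for q
  have s1: "(\<lambda>p. A1 p * B1 (sh q p)) summable_on UNIV" for q using Y1 by blast
  have s2': "(\<lambda>p. A2 p * B2 (sh q p)) summable_on UNIV" for q using Y2 by blast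
  have s2: "(\<lambda>p. B2 p * A2 (sh q p)) summable_on UNIV" for q
    using shift_summable[OF s2'[of q], of q] by (simp add: mult.commute)
  have i2: "(\<Sum>\<^sub>\<infinity>p. B2 p * A2 (sh q p)) = Y2f q" for q
    unfolding Y2f_def using shift_infsum[of "\<lambda>p. A2 p * B2 (sh q p)" q] by (simp add: mult.commute)
  have sxy: "(\<lambda>p. x p * y (sh q p)) summable_on UNIV" for q
  proof (rule summable_on_comparison_test[OF s1[of q]])
    fix p
    have "x p \<le> A1 p" unfolding A1_def using x0[of p] sw_ge1[OF r m0, of p] by (simp add: mult_le_cancel_left1)
    moreover have "y (sh q p) \<le> B1 (sh q p)" unfolding B1_def using y0[of "sh q p"] ex_ge1[OF r, of "sh q p"]
      by (simp add: mult_le_cancel_left1)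
    ultimately show "x p * y (sh q p) \<le> A1 p * B1 (sh q p)"
      using x0[of p] y0[of "sh q p"] by (intro mult_mono) auto
    show "0 \<le> x p * y (sh q p)" using x0[of p] y0[of "sh q p"] by simp
  qed
  have pw: "\<bar>(\<Sum>\<^sub>\<infinity>p. x p * y (sh q p)) * sw \<rho> m q\<bar> \<le> 2 powr m * (Y1f q + Y2f q)" for q
  proof -
    have nn: "0 \<le> (\<Sum>\<^sub>\<infinity>p. x p * y (sh q p))" using x0 y0 by (simp add: infsum_nonneg)
    have "(\<Sum>\<^sub>\<infinity>p. x p * y (sh q p)) * sw \<rho> m q = (\<Sum>\<^sub>\<infinity>p. x p * y (sh q p) * sw \<rho> m q)"
      by (simp add: infsum_cmult_left')
    also have "\<dots> \<le> (\<Sum>\<^sub>\<infinity>p. 2 powr m * (A1 p * B1 (sh q p) + B2 p * A2 (sh q p)))"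
    proof (rule infsum_mono)
      show "(\<lambda>p. x p * y (sh q p) * sw \<rho> m q) summable_on UNIV"
        by (rule summable_on_cmult_left[OF sxy])
      show "(\<lambda>p. 2 powr m * (A1 p * B1 (sh q p) + B2 p * A2 (sh q p))) summable_on UNIV"
        by (intro summable_on_cmult_right summable_on_add s1 s2)
      fix p
      have "x p * y (sh q p) * sw \<rho> m q \<le> x p * y (sh q p) * (2 powr m * (sw \<rho> m p * ex \<rho> (sh q p) + ex \<rho> p * sw \<rho> m (sh q p)))"
        using sw_sub[OF m0 r, of q p] x0[of p] y0[of "sh q p"] by (intro mult_left_mono) auto
      also have "\<dots> = 2 powr m * (A1 p * B1 (sh q p) + B2 p * A2 (sh q p))"
        unfolding A1_def B1_def A2_def B2_def by (simp add: algebra_simps)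
      finally show "x p * y (sh q p) * sw \<rho> m q \<le> 2 powr m * (A1 p * B1 (sh q p) + B2 p * A2 (sh q p))" .
    qed
    also have "\<dots> = 2 powr m * (Y1f q + Y2f q)"
      by (simp add: infsum_cmult_right' infsum_add[OF s1 s2] i2 Y1f_def)
    finally show ?thesis using nn sw_pos[of \<rho> m q] by simp
  qed
  have lY1: "l2 Y1f" and nY1: "n2 Y1f \<le> n2 A1 * (\<Sum>\<^sub>\<infinity>p. B1 p)" using Y1 unfolding Y1f_def by auto
  have lY2: "l2 Y2f" and nY2: "n2 Y2f \<le> n2 A2 * (\<Sum>\<^sub>\<infinity>p. B2 p)" using Y2 unfolding Y2f_def by auto
  note add = l2_add[OF lY1 lY2]
  note sc = l2_scale[OF add[THEN conjunct1], of "2 powr m"]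
  have main: "l2 (\<lambda>q. (\<Sum>\<^sub>\<infinity>p. x p * y (sh q p)) * sw \<rho> m q) \<and>
     n2 (\<lambda>q. (\<Sum>\<^sub>\<infinity>p. x p * y (sh q p)) * sw \<rho> m q) \<le> n2 (\<lambda>q. 2 powr m * (Y1f q + Y2f q))"
    by (rule l2_mono[OF sc[THEN conjunct1]]) (use pw in auto)
  have "n2 (\<lambda>q. 2 powr m * (Y1f q + Y2f q)) \<le> 2 powr m * (n2 Y1f + n2 Y2f)"
    using sc add by simp
  also have "\<dots> \<le> 2 powr m * (n2 A1 * (n2 A2 * SS) + n2 A2 * (n2 A1 * SS))"
  proof -
    have "n2 Y1f \<le> n2 A1 * (n2 A2 * SS)"
      using nY1 iB1 n2_nonneg[of A1] by (meson mult_left_mono order_trans)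
    moreover have "n2 Y2f \<le> n2 A2 * (n2 A1 * SS)"
      using nY2 iB2 n2_nonneg[of A2] by (meson mult_left_mono order_trans)
    ultimately have "n2 Y1f + n2 Y2f \<le> n2 A1 * (n2 A2 * SS) + n2 A2 * (n2 A1 * SS)" by linarith
    then show ?thesis by (simp add: mult_left_mono)
  qed
  also have "\<dots> = 2 * 2 powr m * SS * n2 A1 * n2 A2" by (simp add: algebra_simps)
  finally show ?thesis using main sxy unfolding SS_def A1_def A2_def by auto
qed

lemma conv_sh: "conv U V q = (\<Sum>\<^sub>\<infinity>p. U p * V (sh q p))"
  by (simp add: conv_def sh_def)

lemma conv_est:
  fixes U V :: "'d::finite coeffs"
  assumes m: "m \<ge> real CARD('d) + 1" and r: "\<rho> \<ge> 0"
    and lU: "l2 (\<lambda>p. cmod (U p) * sw \<rho> m p)" and lV: "l2 (\<lambda>p. cmod (V p) * sw \<rho> m p)"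
  shows "(\<forall>q. (\<lambda>p. U p * V (sh q p)) summable_on UNIV) \<and>
         l2 (\<lambda>q. cmod (conv U V q) * sw \<rho> m q) \<and>
         n2 (\<lambda>q. cmod (conv U V q) * sw \<rho> m q)
           \<le> 2 * 2 powr m * sqrt (\<Sum>\<^sub>\<infinity>q::'d fidx. Pw q powr (-m)) * n2 (\<lambda>p. cmod (U p) * sw \<rho> m p) * n2 (\<lambda>p. cmod (V p) * sw \<rho> m p)"
proof -
  note R = conv_real[of m \<rho> "\<lambda>p. cmod (U p)" "\<lambda>p. cmod (V p)", OF m r norm_ge_zero norm_ge_zero lU lV]
  have abs: "(\<lambda>p. norm (U p * V (sh q p))) summable_on UNIV" for q
  proof -
    have "(\<lambda>p. cmod (U p) * cmod (V (sh q p))) summable_on UNIV" using R[THEN conjunct1] by blast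
    then show ?thesis by (simp add: norm_mult)
  qed
  have s: "(\<lambda>p. U p * V (sh q p)) summable_on UNIV" for q by (rule abs_summable_summable[OF abs])
  have pw: "\<bar>cmod (conv U V q) * sw \<rho> m q\<bar> \<le> (\<Sum>\<^sub>\<infinity>p. cmod (U p) * cmod (V (sh q p))) * sw \<rho> m q" for q
  proof -
    have "cmod (conv U V q) \<le> (\<Sum>\<^sub>\<infinity>p. cmod (U p * V (sh q p)))"
      unfolding conv_sh by (rule norm_infsum_bound[OF abs])
    then show ?thesis using sw_pos[of \<rho> m q] by (simp add: norm_mult)
  qed
  have "l2 (\<lambda>q. cmod (conv U V q) * sw \<rho> m q) \<and>
        n2 (\<lambda>q. cmod (conv U V q) * sw \<rho> m q) \<le> n2 (\<lambda>q. (\<Sum>\<^sub>\<infinity>p. cmod (U p) * cmod (V (sh q p))) * sw \<rho> m q)"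
    by (rule l2_mono) (use R pw in auto)
  then show ?thesis using R s by auto
qed


definition Hl :: "real \<Rightarrow> real \<Rightarrow> 'd::finite coeffs \<Rightarrow> bool" where
  "Hl \<rho> m U \<longleftrightarrow> l2 (\<lambda>p. cmod (U p) * sw \<rho> m p)"
definition Hn :: "real \<Rightarrow> real \<Rightarrow> 'd::finite coeffs \<Rightarrow> real" where
  "Hn \<rho> m U = n2 (\<lambda>p. cmod (U p) * sw \<rho> m p)"

lemma sq_weight: "(cmod (U p) * sw \<rho> m p)\<^sup>2 = (cmod (U p))\<^sup>2 * weight \<rho> m p"
  by (simp add: weight_sw power_mult_distrib)

lemma Hspace_iff: "U \<in> Hspace \<rho> m \<longleftrightarrow> (\<forall>k. U (k, 0) = 0) \<and> Hl \<rho> m U"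
  unfolding Hspace_def Hl_def l2_def sq_weight by simp

lemma Hnorm_eq: "Hnorm \<rho> m U = Hn \<rho> m U"
  unfolding Hnorm_def Hnormsq_def Hn_def n2_def sq_weight ..

lemma Hn_nonneg: "Hn \<rho> m U \<ge> 0" unfolding Hn_def by (rule n2_nonneg)

lemma Hlist:
  assumes "\<forall>(c, Y) \<in> set L. c \<ge> 0 \<and> Hl \<rho> m Y"
  shows "l2 (\<lambda>q. \<Sum>(c, Y)\<leftarrow>L. c * (cmod (Y q) * sw \<rho> m q)) \<and>
         n2 (\<lambda>q. \<Sum>(c, Y)\<leftarrow>L. c * (cmod (Y q) * sw \<rho> m q)) \<le> (\<Sum>(c, Y)\<leftarrow>L. c * Hn \<rho> m Y)"
  using assms
proof (induction L)
  case Nil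
  have "l2 (\<lambda>q::'a fidx. 0::real)" "n2 (\<lambda>q::'a fidx. 0::real) = 0" by (simp_all add: l2_def n2_def)
  then show ?case by simp
next
  case (Cons a L)
  obtain c Y where a: "a = (c, Y)" by fastforce
  have c0: "c \<ge> 0" and hY: "Hl \<rho> m Y" using Cons.prems a by auto
  from Cons.IH Cons.prems have IH: "l2 (\<lambda>q. \<Sum>(c, Y)\<leftarrow>L. c * (cmod (Y q) * sw \<rho> m q))"
     "n2 (\<lambda>q. \<Sum>(c, Y)\<leftarrow>L. c * (cmod (Y q) * sw \<rho> m q)) \<le> (\<Sum>(c, Y)\<leftarrow>L. c * Hn \<rho> m Y)" by auto
  note sc = l2_scale[OF hY[unfolded Hl_def], of c]
  note ad = l2_add[OF sc[THEN conjunct1] IH(1)]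
  show ?case
  proof
    show "l2 (\<lambda>q. \<Sum>(c, Y)\<leftarrow>a # L. c * (cmod (Y q) * sw \<rho> m q))" using ad a by simp
    have "n2 (\<lambda>q. \<Sum>(c, Y)\<leftarrow>a # L. c * (cmod (Y q) * sw \<rho> m q))
        = n2 (\<lambda>q. c * (cmod (Y q) * sw \<rho> m q) + (\<Sum>(c, Y)\<leftarrow>L. c * (cmod (Y q) * sw \<rho> m q)))"
      using a by simp
    also have "\<dots> \<le> c * Hn \<rho> m Y + (\<Sum>(c, Y)\<leftarrow>L. c * Hn \<rho> m Y)"
      using ad sc IH(2) c0 unfolding Hn_def by simp
    finally show "n2 (\<lambda>q. \<Sum>(c, Y)\<leftarrow>a # L. c * (cmod (Y q) * sw \<rho> m q)) \<le> (\<Sum>(c, Y)\<leftarrow>a # L. c * Hn \<rho> m Y)"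
      using a by simp
  qed
qed

lemma sum_list_mult_right: "(\<Sum>(c, Y)\<leftarrow>L. (c::real) * g Y) * s = (\<Sum>(c, Y)\<leftarrow>L. c * (g Y * s))"
  by (induction L) (auto simp: algebra_simps)

lemma Hbound:
  assumes "\<forall>(c, Y) \<in> set L. c \<ge> 0 \<and> Hl \<rho> m Y"
    and "\<And>q. cmod (X q) \<le> (\<Sum>(c, Y)\<leftarrow>L. c * cmod (Y q))"
  shows "Hl \<rho> m X \<and> Hn \<rho> m X \<le> (\<Sum>(c, Y)\<leftarrow>L. c * Hn \<rho> m Y)"
proof -
  note HL = Hlist[OF assms(1)]
  have "l2 (\<lambda>p. cmod (X p) * sw \<rho> m p) \<and> n2 (\<lambda>p. cmod (X p) * sw \<rho> m p) \<le> n2 (\<lambda>q. \<Sum>(c, Y)\<leftarrow>L. c * (cmod (Y q) * sw \<rho> m q))"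
  proof (rule l2_mono[OF HL[THEN conjunct1]])
    fix q
    have "cmod (X q) * sw \<rho> m q \<le> (\<Sum>(c, Y)\<leftarrow>L. c * cmod (Y q)) * sw \<rho> m q"
      using assms(2)[of q] sw_pos[of \<rho> m q] by (intro mult_right_mono) auto
    also have "\<dots> = (\<Sum>(c, Y)\<leftarrow>L. c * (cmod (Y q) * sw \<rho> m q))"
      by (rule sum_list_mult_right)
    finally show "\<bar>cmod (X q) * sw \<rho> m q\<bar> \<le> (\<Sum>(c, Y)\<leftarrow>L. c * (cmod (Y q) * sw \<rho> m q))"
      using sw_pos[of \<rho> m q] by simp
  qed
  then show ?thesis using HL unfolding Hl_def Hn_def by auto
qed

lemma Hl_diff: "Hl \<rho> m A \<Longrightarrow> Hl \<rho> m B \<Longrightarrow> Hl \<rho> m (\<lambda>p. A p - B p)"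
  using Hbound[of "[(1, A), (1, B)]" \<rho> m "\<lambda>p. A p - B p"] by (simp add: norm_triangle_ineq4)

lemma Hn_diff_le: "Hl \<rho> m A \<Longrightarrow> Hl \<rho> m B \<Longrightarrow> Hn \<rho> m (\<lambda>p. A p - B p) \<le> Hn \<rho> m A + Hn \<rho> m B"
  using Hbound[of "[(1, A), (1, B)]" \<rho> m "\<lambda>p. A p - B p"] by (simp add: norm_triangle_ineq4)

lemma Hl_add: "Hl \<rho> m A \<Longrightarrow> Hl \<rho> m B \<Longrightarrow> Hl \<rho> m (\<lambda>p. A p + B p) \<and> Hn \<rho> m (\<lambda>p. A p + B p) \<le> Hn \<rho> m A + Hn \<rho> m B"
  using Hbound[of "[(1, A), (1, B)]" \<rho> m "\<lambda>p. A p + B p"] by (simp add: norm_triangle_ineq)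

lemma Hl_scale: "Hl \<rho> m A \<Longrightarrow> Hl \<rho> m (\<lambda>p. c * A p) \<and> Hn \<rho> m (\<lambda>p. c * A p) = cmod c * Hn \<rho> m A"
proof -
  assume h: "Hl \<rho> m A"
  have e: "(\<lambda>p. cmod (c * A p) * sw \<rho> m p) = (\<lambda>p. cmod c * (cmod (A p) * sw \<rho> m p))"
    by (simp add: norm_mult mult.assoc)
  show ?thesis using l2_scale[OF h[unfolded Hl_def], of "cmod c"] unfolding Hl_def Hn_def e by simp
qed

lemma conv_sum:
  assumes m: "m \<ge> real CARD('d) + 1" and r: "\<rho> \<ge> 0" and "Hl \<rho> m (U::'d::finite coeffs)" "Hl \<rho> m V"
  shows "(\<lambda>p. U p * V (sh q p)) summable_on UNIV"
  using conv_est[OF m r] assms unfolding Hl_def by blast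

lemma conv_Hl:
  assumes m: "m \<ge> real CARD('d) + 1" and r: "\<rho> \<ge> 0" and "Hl \<rho> m (U::'d::finite coeffs)" "Hl \<rho> m V"
  shows "Hl \<rho> m (conv U V) \<and> Hn \<rho> m (conv U V) \<le> (2 * 2 powr m * sqrt (\<Sum>\<^sub>\<infinity>q::'d fidx. Pw q powr (-m))) * Hn \<rho> m U * Hn \<rho> m V"
  using conv_est[OF m r] assms unfolding Hl_def Hn_def by blast

lemma conv_diff2:
  assumes m: "m \<ge> real CARD('d) + 1" and r: "\<rho> \<ge> 0"
    and h: "Hl \<rho> m A" "Hl \<rho> m B" "Hl \<rho> m C" "Hl \<rho> m (D::'d::finite coeffs)"
  shows "conv A B q - conv C D q = conv (\<lambda>p. A p - C p) B q + conv C (\<lambda>p. B p - D p) q"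
proof -
  have AC: "Hl \<rho> m (\<lambda>p. A p - C p)" by (rule Hl_diff[OF h(1,3)])
  have BD: "Hl \<rho> m (\<lambda>p. B p - D p)" by (rule Hl_diff[OF h(2,4)])
  note s1 = conv_sum[OF m r AC h(2), of q] and s2 = conv_sum[OF m r h(3) BD, of q]
  note s3 = conv_sum[OF m r h(1) h(2), of q] and s4 = conv_sum[OF m r h(3) h(4), of q]
  have "conv (\<lambda>p. A p - C p) B q + conv C (\<lambda>p. B p - D p) q
      = (\<Sum>\<^sub>\<infinity>p. (A p - C p) * B (sh q p) + C p * (B (sh q p) - D (sh q p)))"
    unfolding conv_sh by (rule infsum_add[OF s1 s2, symmetric])
  also have "\<dots> = (\<Sum>\<^sub>\<infinity>p. A p * B (sh q p) - C p * D (sh q p))"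
    by (rule infsum_cong) (simp add: algebra_simps)
  also have "\<dots> = conv A B q - conv C D q"
    unfolding conv_sh by (rule infsum_diff'[OF s3 s4])
  finally show ?thesis by simp
qed

lemma conv_scale_left: "conv (\<lambda>p. c * A p) B q = c * conv A B q"
  unfolding conv_sh by (simp add: mult.assoc infsum_cmult_right')

lemma conv_scale_right: "conv A (\<lambda>p. c * B p) q = c * conv A B q"
proof -
  have "conv A (\<lambda>p. c * B p) q = (\<Sum>\<^sub>\<infinity>p. c * (A p * B (sh q p)))"
    unfolding conv_sh by (rule infsum_cong) (simp add: algebra_simps)
  then show ?thesis unfolding conv_sh by (simp add: infsum_cmult_right')
qed

lemma conv_zero_left: "conv (\<lambda>p. 0) B q = 0"
  unfolding conv_sh by simp


lemma conv_I2:
  assumes m: "m \<ge> real CARD('d) + 1" and r: "\<rho> \<ge> 0" and h0: "h \<noteq> 0"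
    and hU0: "Hl \<rho> m U0" and hU1: "Hl \<rho> m U1" and hUd: "Hl \<rho> m (Ud::'d::finite coeffs)"
  shows "(conv U1 U1 q - conv U0 U0 q) / h - conv Ud U0 q - conv U0 Ud q
       = conv (\<lambda>p. (U1 p - U0 p) / h - Ud p) U1 q + conv Ud (\<lambda>p. U1 p - U0 p) q
         + conv U0 (\<lambda>p. (U1 p - U0 p) / h - Ud p) q"
proof -
  define W where "W p = (U1 p - U0 p) / h" for p
  have Weq: "W = (\<lambda>p. inverse h * (U1 p - U0 p))" unfolding W_def by (simp add: field_simps)
  have hD: "Hl \<rho> m (\<lambda>p. U1 p - U0 p)" by (rule Hl_diff[OF hU1 hU0])
  have hW: "Hl \<rho> m W" unfolding Weq by (rule Hl_scale[OF hD, THEN conjunct1])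
  have 1: "conv U1 U1 q - conv U0 U0 q = conv (\<lambda>p. U1 p - U0 p) U1 q + conv U0 (\<lambda>p. U1 p - U0 p) q"
    by (rule conv_diff2[OF m r hU1 hU1 hU0 hU0])
  have 2: "conv (\<lambda>p. U1 p - U0 p) U1 q / h = conv W U1 q"
    unfolding Weq conv_scale_left by (simp add: field_simps)
  have 3: "conv U0 (\<lambda>p. U1 p - U0 p) q / h = conv U0 W q"
    unfolding Weq conv_scale_right by (simp add: field_simps)
  have 4: "conv W U1 q - conv Ud U0 q = conv (\<lambda>p. W p - Ud p) U1 q + conv Ud (\<lambda>p. U1 p - U0 p) q"
    by (rule conv_diff2[OF m r hW hU1 hUd hU0])
  have 5: "conv U0 W q - conv U0 Ud q = conv (\<lambda>p. U0 p - U0 p) W q + conv U0 (\<lambda>p. W p - Ud p) q"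
    by (rule conv_diff2[OF m r hU0 hW hU0 hUd])
  have 6: "conv (\<lambda>p. U0 p - U0 p) W q = 0" by (simp add: conv_zero_left)
  have "(conv U1 U1 q - conv U0 U0 q) / h - conv Ud U0 q - conv U0 Ud q
      = (conv W U1 q - conv Ud U0 q) + (conv U0 W q - conv U0 Ud q)"
    unfolding 1 add_divide_distrib 2 3 by simp
  also have "\<dots> = conv (\<lambda>p. W p - Ud p) U1 q + conv Ud (\<lambda>p. U1 p - U0 p) q + conv U0 (\<lambda>p. W p - Ud p) q"
    unfolding 4 5 6 by simp
  finally show ?thesis unfolding W_def .
qed

lemma alg_id:
  fixes h s F X0 X1 P1 P2 Q1 Q2 Q3 Y1 Y2 M0 M1 Md :: complex
  assumes h0: "h \<noteq> 0"
    and I1: "X1 - X0 = P1 + P2"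
    and I2: "(X1 - X0) / h - Y1 - Y2 = Q1 + Q2 + Q3"
  shows "(M1 * (s * X1 + F) - M0 * (s * X0 + F)) / h - (Md * (s * X0 + F) + M0 * s * (Y1 + Y2))
       = ((M1 - M0) / h - Md) * (s * X1 + F) + Md * s * (P1 + P2) + M0 * s * (Q1 + Q2 + Q3)"
  unfolding I1[symmetric] I2[symmetric] using h0 by (simp add: field_simps)

lemma nb7:
  fixes A1 A2 A3 s X1 F P1 P2 Q1 Q2 Q3 :: complex
  assumes "cmod A1 * cmod s \<le> k1" "cmod A1 \<le> k1" "cmod A2 * cmod s \<le> k2" "cmod A3 * cmod s \<le> k3"
  shows "cmod (A1 * (s * X1 + F) + A2 * s * (P1 + P2) + A3 * s * (Q1 + Q2 + Q3))
    \<le> k1 * cmod X1 + k1 * cmod F + k2 * cmod P1 + k2 * cmod P2 + k3 * cmod Q1 + k3 * cmod Q2 + k3 * cmod Q3"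
proof -
  have t1: "cmod (A1 * (s * X1 + F)) \<le> k1 * cmod X1 + k1 * cmod F"
  proof -
    have "cmod (A1 * (s * X1 + F)) \<le> cmod A1 * cmod s * cmod X1 + cmod A1 * cmod F"
      by (metis distrib_left norm_mult norm_triangle_ineq mult.assoc)
    also have "\<dots> \<le> k1 * cmod X1 + k1 * cmod F"
      using assms(1,2) by (intro add_mono mult_right_mono) auto
    finally show ?thesis .
  qed
  have t2: "cmod (A2 * s * (P1 + P2)) \<le> k2 * cmod P1 + k2 * cmod P2"
  proof -
    have "cmod (A2 * s * (P1 + P2)) \<le> cmod A2 * cmod s * (cmod P1 + cmod P2)"
      by (simp add: norm_mult mult_left_mono norm_triangle_ineq)
    also have "\<dots> \<le> k2 * (cmod P1 + cmod P2)" using assms(3) by (intro mult_right_mono) auto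
    finally show ?thesis by (simp add: distrib_left)
  qed
  have t3: "cmod (A3 * s * (Q1 + Q2 + Q3)) \<le> k3 * cmod Q1 + k3 * cmod Q2 + k3 * cmod Q3"
  proof -
    have "cmod (Q1 + Q2 + Q3) \<le> cmod Q1 + cmod Q2 + cmod Q3"
      by (meson add_mono norm_triangle_ineq order_trans order_refl)
    then have "cmod (A3 * s * (Q1 + Q2 + Q3)) \<le> cmod A3 * cmod s * (cmod Q1 + cmod Q2 + cmod Q3)"
      by (simp add: norm_mult mult_left_mono)
    also have "\<dots> \<le> k3 * (cmod Q1 + cmod Q2 + cmod Q3)" using assms(4) by (intro mult_right_mono) auto
    finally show ?thesis by (simp add: distrib_left)
  qed
  have "cmod (A1 * (s * X1 + F) + A2 * s * (P1 + P2) + A3 * s * (Q1 + Q2 + Q3))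
     \<le> cmod (A1 * (s * X1 + F)) + cmod (A2 * s * (P1 + P2)) + cmod (A3 * s * (Q1 + Q2 + Q3))"
    by (meson add_mono norm_triangle_ineq order_trans order_refl)
  then show ?thesis using t1 t2 t3 by linarith
qed

lemma split_bound:
  fixes x t C :: real
  assumes "x \<ge> 0" "t \<ge> 0" "x * (1 + t) \<le> C"
  shows "x * t \<le> C" "x \<le> C"
  using assms by (auto simp: algebra_simps) (smt (verit) mult_nonneg_nonneg)+


lemma cmod_s2: "cmod ((of_int j)\<^sup>2 :: complex) = (real_of_int j)\<^sup>2"
  by (metis norm_of_int norm_power power2_abs of_int_power)

lemma cmod_s: "cmod (- (of_int j)\<^sup>2 :: complex) = (real_of_int j)\<^sup>2"
proof -
  have "(of_int j :: complex) = complex_of_real (real_of_int j)" by simp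
  then have "cmod ((of_int j :: complex)\<^sup>2) = (real_of_int j)\<^sup>2"
    by (metis norm_of_real norm_power power2_abs)
  then show ?thesis by simp
qed

lemma mul_bound:
  fixes M s X F :: complex
  assumes "cmod M * cmod s \<le> k" "cmod M \<le> k"
  shows "cmod (M * (s * X + F)) \<le> k * cmod X + k * cmod F"
proof -
  have "cmod (M * (s * X + F)) \<le> cmod M * cmod s * cmod X + cmod M * cmod F"
    by (metis distrib_left norm_mult norm_triangle_ineq mult.assoc)
  also have "\<dots> \<le> k * cmod X + k * cmod F"
    using assms by (intro add_mono mult_right_mono) auto
  finally show ?thesis .
qed

lemma partA:
  fixes T :: "complex \<Rightarrow> 'd::finite coeffs \<Rightarrow> 'd coeffs" and Mf :: "complex \<Rightarrow> 'd fidx \<Rightarrow> complex"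
  assumes m: "m \<ge> real CARD('d) + 1" and r: "\<rho> \<ge> 0" and f: "f \<in> Hspace \<rho> m"
    and Teq: "\<And>e V q. T e V q = Mf e q * ((- (of_int (snd q))\<^sup>2) * conv V V q + f q)"
    and C1: "C1 \<ge> 0"
    and H1: "\<And>q. snd q \<noteq> 0 \<Longrightarrow> cmod (Mf e q) * (1 + (real_of_int (snd q))\<^sup>2) \<le> C1"
    and V: "V \<in> Hspace \<rho> m"
  shows "T e V \<in> Hspace \<rho> m \<and>
    Hnorm \<rho> m (T e V) \<le> C1 * ((2 * 2 powr m * sqrt (\<Sum>\<^sub>\<infinity>q::'d fidx. Pw q powr (-m))) * (Hnorm \<rho> m V)\<^sup>2 + Hnorm \<rho> m f)"
proof -
  define K where "K = 2 * 2 powr m * sqrt (\<Sum>\<^sub>\<infinity>q::'d fidx. Pw q powr (-m))"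
  have f0: "\<And>k. f (k, 0) = 0" and hf: "Hl \<rho> m f" using f by (auto simp: Hspace_iff)
  have hV: "Hl \<rho> m V" using V by (auto simp: Hspace_iff)
  note hc = conv_Hl[OF m r hV hV, folded K_def]
  have zero: "T e V (k, 0) = 0" for k by (simp add: Teq f0)
  have pw: "cmod (T e V q) \<le> C1 * cmod (conv V V q) + C1 * cmod (f q)" for q
  proof (cases "snd q = 0")
    case True
    then have "q = (fst q, 0)" by (metis prod.collapse)
    then have "T e V q = 0" using zero by metis
    then show ?thesis using C1 by simp
  next
    case False
    have b: "cmod (Mf e q) * (real_of_int (snd q))\<^sup>2 \<le> C1" "cmod (Mf e q) \<le> C1"
      using split_bound[OF norm_ge_zero zero_le_power2 H1[OF False]] by auto
    show ?thesis unfolding Teq by (rule mul_bound) (use b in \<open>simp_all add: cmod_s cmod_s2\<close>)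
  qed
  have HB: "Hl \<rho> m (T e V) \<and> Hn \<rho> m (T e V) \<le> C1 * Hn \<rho> m (conv V V) + C1 * Hn \<rho> m f"
    using Hbound[of "[(C1, conv V V), (C1, f)]" \<rho> m "T e V"] hc hf C1 pw by simp
  have "C1 * Hn \<rho> m (conv V V) + C1 * Hn \<rho> m f \<le> C1 * (K * (Hn \<rho> m V)\<^sup>2 + Hn \<rho> m f)"
    using hc C1 by (simp add: distrib_left power2_eq_square mult_left_mono mult.assoc)
  then show ?thesis using HB zero unfolding Hspace_iff Hnorm_eq K_def by auto
qed


lemma prod_le3: "0 \<le> a \<Longrightarrow> a \<le> x \<Longrightarrow> 0 \<le> b \<Longrightarrow> b \<le> y \<Longrightarrow> (K::real) \<ge> 0 \<Longrightarrow> K * a * b \<le> K * x * y"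
  by (metis mult_left_mono mult_mono order_trans mult_nonneg_nonneg)

lemma partB:
  fixes T :: "complex \<Rightarrow> 'd::finite coeffs \<Rightarrow> 'd coeffs" and Mf Md :: "complex \<Rightarrow> 'd fidx \<Rightarrow> complex"
    and Om :: "complex set"
  assumes m: "m \<ge> real CARD('d) + 1" and r: "\<rho> \<ge> 0" and f: "f \<in> Hspace \<rho> m"
    and Teq: "\<And>e V q. T e V q = Mf e q * ((- (of_int (snd q))\<^sup>2) * conv V V q + f q)"
    and C1: "C1 \<ge> 0" and C2: "C2 \<ge> 0" and C3: "C3 \<ge> 0"
    and H1: "\<And>e q. e \<in> Om \<Longrightarrow> snd q \<noteq> 0 \<Longrightarrow> cmod (Mf e q) * (1 + (real_of_int (snd q))\<^sup>2) \<le> C1"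
    and H2: "\<And>e q. e \<in> Om \<Longrightarrow> snd q \<noteq> 0 \<Longrightarrow> cmod (Md e q) * (1 + (real_of_int (snd q))\<^sup>2) \<le> C2"
    and H3: "\<And>e e' q. e \<in> Om \<Longrightarrow> e' \<in> Om \<Longrightarrow> e' \<noteq> e \<Longrightarrow> snd q \<noteq> 0 \<Longrightarrow>
               cmod ((Mf e' q - Mf e q) / (e' - e) - Md e q) * (1 + (real_of_int (snd q))\<^sup>2) \<le> cmod (e' - e) * C3"
    and U: "\<And>e. e \<in> Om \<Longrightarrow> U e \<in> Hspace \<rho> m \<and> Hdiff_within \<rho> m U e Om"
    and e: "e \<in> Om"
  shows "Hdiff_within \<rho> m (\<lambda>e. T e (U e)) e Om"
proof -
  define K where "K = 2 * 2 powr m * sqrt (\<Sum>\<^sub>\<infinity>q::'d fidx. Pw q powr (-m))"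
  have K0: "K \<ge> 0" unfolding K_def by (intro mult_nonneg_nonneg real_sqrt_ge_zero infsum_nonneg) auto
  have f0: "\<And>k. f (k, 0) = 0" and hf: "Hl \<rho> m f" using f by (auto simp: Hspace_iff)
  define U0 where "U0 = U e"
  have hU0: "Hl \<rho> m U0" using U[OF e] unfolding U0_def by (auto simp: Hspace_iff)
  obtain Ud where Ud: "Ud \<in> Hspace \<rho> m"
    and lim: "((\<lambda>h. Hnorm \<rho> m (\<lambda>q. (U (e + h) q - U e q) / h - Ud q)) \<longlongrightarrow> 0) (at 0 within {h. e + h \<in> Om})"
    using U[OF e] unfolding Hdiff_within_def by blast
  have hUd: "Hl \<rho> m Ud" using Ud by (auto simp: Hspace_iff)
  define s where "s q = (- (of_int (snd q))\<^sup>2 :: complex)" for q :: "'d fidx"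
  have s0: "s (k, 0) = 0" for k unfolding s_def by simp
  have cs: "cmod (s q) = (real_of_int (snd q))\<^sup>2" for q unfolding s_def by (rule cmod_s)
  have Teq': "T e' V q = Mf e' q * (s q * conv V V q + f q)" for e' V q unfolding s_def by (rule Teq)
  have bnds: "cmod (Mf e q) * cmod (s q) \<le> C1" "cmod (Mf e q) \<le> C1"
     "cmod (Md e q) * cmod (s q) \<le> C2" "cmod (Md e q) \<le> C2" if "snd q \<noteq> 0" for q
    using split_bound[OF norm_ge_zero zero_le_power2 H1[OF e that]]
      split_bound[OF norm_ge_zero zero_le_power2 H2[OF e that]] by (auto simp: cs)
  define D where "D q = Md e q * (s q * conv U0 U0 q + f q) + Mf e q * s q * (conv Ud U0 q + conv U0 Ud q)" for q
  have D0: "D (k, 0) = 0" for k unfolding D_def by (simp add: s0 f0)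
  have Dpw: "cmod (D q) \<le> C2 * cmod (conv U0 U0 q) + C2 * cmod (f q) + C1 * cmod (conv Ud U0 q) + C1 * cmod (conv U0 Ud q)" for q
  proof (cases "snd q = 0")
    case True
    then have "q = (fst q, 0)" by (metis prod.collapse)
    then have "D q = 0" using D0 by metis
    then show ?thesis using C1 C2 by simp
  next
    case False
    have a: "cmod (Md e q * (s q * conv U0 U0 q + f q)) \<le> C2 * cmod (conv U0 U0 q) + C2 * cmod (f q)"
      by (rule mul_bound) (use bnds[OF False] in auto)
    have "cmod (Mf e q * s q * (conv Ud U0 q + conv U0 Ud q)) \<le> cmod (Mf e q) * cmod (s q) * (cmod (conv Ud U0 q) + cmod (conv U0 Ud q))"
      by (simp add: norm_mult mult_left_mono norm_triangle_ineq)
    also have "\<dots> \<le> C1 * (cmod (conv Ud U0 q) + cmod (conv U0 Ud q))"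
      using bnds[OF False] by (intro mult_right_mono) auto
    finally have b: "cmod (Mf e q * s q * (conv Ud U0 q + conv U0 Ud q)) \<le> C1 * cmod (conv Ud U0 q) + C1 * cmod (conv U0 Ud q)"
      by (simp add: distrib_left)
    show ?thesis unfolding D_def using a b norm_triangle_ineq[of "Md e q * (s q * conv U0 U0 q + f q)" "Mf e q * s q * (conv Ud U0 q + conv U0 Ud q)"]
      by linarith
  qed
  have Dsp: "D \<in> Hspace \<rho> m"
  proof -
    have "Hl \<rho> m D"
      using Hbound[of "[(C2, conv U0 U0), (C2, f), (C1, conv Ud U0), (C1, conv U0 Ud)]" \<rho> m D]
        conv_Hl[OF m r hU0 hU0] conv_Hl[OF m r hUd hU0] conv_Hl[OF m r hU0 hUd] hf C1 C2 Dpw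
      by (simp add: add.assoc)
    then show ?thesis using D0 by (simp add: Hspace_iff)
  qed
  define \<phi> where "\<phi> h = Hnorm \<rho> m (\<lambda>q. (U (e + h) q - U e q) / h - Ud q)" for h
  define N0 where "N0 = Hn \<rho> m U0"
  define Nd where "Nd = Hn \<rho> m Ud"
  define Nf where "Nf = Hn \<rho> m f"
  define \<psi> where "\<psi> h = cmod h * (\<phi> h + Nd)" for h
  define R where "R h = cmod h * C3 * (K * (N0 + \<psi> h) * (N0 + \<psi> h)) + cmod h * C3 * Nf
      + C2 * (K * \<psi> h * (N0 + \<psi> h)) + C2 * (K * N0 * \<psi> h)
      + C1 * (K * \<phi> h * (N0 + \<psi> h)) + C1 * (K * Nd * \<psi> h) + C1 * (K * N0 * \<phi> h)" for h
  have bound: "Hnorm \<rho> m (\<lambda>q. (T (e + h) (U (e + h)) q - T e (U e) q) / h - D q) \<le> R h"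
    if h0: "h \<noteq> 0" and eh: "e + h \<in> Om" for h
  proof -
    define U1 where "U1 = U (e + h)"
    have hU1: "Hl \<rho> m U1" using U[OF eh] unfolding U1_def by (auto simp: Hspace_iff)
    define Dl where "Dl = (\<lambda>p. U1 p - U0 p)"
    define E where "E = (\<lambda>p. (U1 p - U0 p) / h - Ud p)"
    have hDl: "Hl \<rho> m Dl" unfolding Dl_def by (rule Hl_diff[OF hU1 hU0])
    have hW: "Hl \<rho> m (\<lambda>p. inverse h * Dl p)" by (rule Hl_scale[OF hDl, THEN conjunct1])
    have Eeq: "E = (\<lambda>p. inverse h * Dl p - Ud p)" unfolding E_def Dl_def by (simp add: field_simps)
    have hE: "Hl \<rho> m E" unfolding Eeq by (rule Hl_diff[OF hW hUd])
    have nE: "Hn \<rho> m E = \<phi> h" unfolding \<phi>_def Hnorm_eq E_def U1_def U0_def ..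
    have hEd: "Hl \<rho> m (\<lambda>p. E p + Ud p)" and nEd: "Hn \<rho> m (\<lambda>p. E p + Ud p) \<le> \<phi> h + Nd"
      using Hl_add[OF hE hUd] nE unfolding Nd_def by auto
    have Dleq: "Dl = (\<lambda>p. h * (E p + Ud p))" unfolding Dl_def E_def using h0 by (auto simp: field_simps)
    have nDl: "Hn \<rho> m Dl \<le> \<psi> h"
    proof -
      have "Hn \<rho> m Dl = cmod h * Hn \<rho> m (\<lambda>p. E p + Ud p)" unfolding Dleq by (rule Hl_scale[OF hEd, THEN conjunct2])
      also have "\<dots> \<le> cmod h * (\<phi> h + Nd)" using nEd by (intro mult_left_mono) auto
      finally show ?thesis unfolding \<psi>_def .
    qed
    have nU1: "Hn \<rho> m U1 \<le> N0 + \<psi> h"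
    proof -
      have "U1 = (\<lambda>p. U0 p + Dl p)" unfolding Dl_def by simp
      then have "Hn \<rho> m U1 \<le> Hn \<rho> m U0 + Hn \<rho> m Dl" using Hl_add[OF hU0 hDl] by simp
      then show ?thesis using nDl unfolding N0_def by simp
    qed
    define X where "X q = (T (e + h) U1 q - T e U0 q) / h - D q" for q
    have Xid: "X q = ((Mf (e + h) q - Mf e q) / h - Md e q) * (s q * conv U1 U1 q + f q)
        + Md e q * s q * (conv Dl U1 q + conv U0 Dl q)
        + Mf e q * s q * (conv E U1 q + conv Ud Dl q + conv U0 E q)" for q
    proof -
      have I1: "conv U1 U1 q - conv U0 U0 q = conv Dl U1 q + conv U0 Dl q"
        unfolding Dl_def by (rule conv_diff2[OF m r hU1 hU1 hU0 hU0])
      have I2: "(conv U1 U1 q - conv U0 U0 q) / h - conv Ud U0 q - conv U0 Ud q = conv E U1 q + conv Ud Dl q + conv U0 E q"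
        unfolding E_def Dl_def by (rule conv_I2[OF m r h0 hU0 hU1 hUd])
      show ?thesis unfolding X_def Teq' D_def by (rule alg_id[OF h0 I1 I2])
    qed
    have Xpw: "cmod (X q) \<le> cmod h * C3 * cmod (conv U1 U1 q) + cmod h * C3 * cmod (f q)
        + C2 * cmod (conv Dl U1 q) + C2 * cmod (conv U0 Dl q)
        + C1 * cmod (conv E U1 q) + C1 * cmod (conv Ud Dl q) + C1 * cmod (conv U0 E q)" for q
    proof (cases "snd q = 0")
      case True
      then have "q = (fst q, 0)" by (metis prod.collapse)
      then have "s q = 0" "f q = 0" using s0 f0 by metis+
      then have "X q = 0" unfolding Xid by simp
      then show ?thesis using C1 C2 C3 by simp
    next
      case False
      have ne: "e + h \<noteq> e" using h0 by simp
      have h3: "cmod ((Mf (e + h) q - Mf e q) / h - Md e q) * (1 + (real_of_int (snd q))\<^sup>2) \<le> cmod h * C3"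
        using H3[OF e eh ne False] by simp
      note sb = split_bound[OF norm_ge_zero zero_le_power2 h3]
      show ?thesis unfolding Xid
        by (rule nb7) (use sb bnds[OF False] in \<open>simp_all add: cs\<close>)
    qed
    have L: "\<forall>(c, Y) \<in> set [(cmod h * C3, conv U1 U1), (cmod h * C3, f), (C2, conv Dl U1), (C2, conv U0 Dl),
        (C1, conv E U1), (C1, conv Ud Dl), (C1, conv U0 E)]. c \<ge> 0 \<and> Hl \<rho> m Y"
      using conv_Hl[OF m r hU1 hU1] conv_Hl[OF m r hDl hU1] conv_Hl[OF m r hU0 hDl]
        conv_Hl[OF m r hE hU1] conv_Hl[OF m r hUd hDl] conv_Hl[OF m r hU0 hE] hf C1 C2 C3 by auto
    have HB: "Hn \<rho> m X \<le> cmod h * C3 * Hn \<rho> m (conv U1 U1) + cmod h * C3 * Nf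
        + C2 * Hn \<rho> m (conv Dl U1) + C2 * Hn \<rho> m (conv U0 Dl)
        + C1 * Hn \<rho> m (conv E U1) + C1 * Hn \<rho> m (conv Ud Dl) + C1 * Hn \<rho> m (conv U0 E)"
      using Hbound[OF L, of X] Xpw unfolding Nf_def by (simp add: add.assoc)
    note cH = conv_Hl[OF m r, folded K_def, THEN conjunct2]
    have n0: "Hn \<rho> m A \<ge> 0" for A :: "'d coeffs" by (rule Hn_nonneg)
    have pN0: "0 \<le> N0" "0 \<le> Nd" unfolding N0_def Nd_def by (rule n0)+
    have t1: "Hn \<rho> m (conv U1 U1) \<le> K * (N0 + \<psi> h) * (N0 + \<psi> h)"
      using cH[OF hU1 hU1] prod_le3[OF n0 nU1 n0 nU1 K0] by linarith
    have t3: "Hn \<rho> m (conv Dl U1) \<le> K * \<psi> h * (N0 + \<psi> h)"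
      using cH[OF hDl hU1] prod_le3[OF n0 nDl n0 nU1 K0] by linarith
    have t4: "Hn \<rho> m (conv U0 Dl) \<le> K * N0 * \<psi> h"
      using cH[OF hU0 hDl] prod_le3[OF n0 _ n0 nDl K0, of U0 N0] unfolding N0_def by auto
    have t5: "Hn \<rho> m (conv E U1) \<le> K * \<phi> h * (N0 + \<psi> h)"
      using cH[OF hE hU1] prod_le3[OF n0 _ n0 nU1 K0, of E "\<phi> h"] nE by auto
    have t6: "Hn \<rho> m (conv Ud Dl) \<le> K * Nd * \<psi> h"
      using cH[OF hUd hDl] prod_le3[OF n0 _ n0 nDl K0, of Ud Nd] unfolding Nd_def by auto
    have t7: "Hn \<rho> m (conv U0 E) \<le> K * N0 * \<phi> h"
      using cH[OF hU0 hE] prod_le3[OF n0 _ n0 _ K0, of U0 N0 E "\<phi> h"] nE unfolding N0_def by auto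
    have "Hn \<rho> m X \<le> R h"
    proof -
      have ch: "cmod h * C3 \<ge> 0" using C3 by simp
      have "Hn \<rho> m X \<le> cmod h * C3 * (K * (N0 + \<psi> h) * (N0 + \<psi> h)) + cmod h * C3 * Nf
        + C2 * (K * \<psi> h * (N0 + \<psi> h)) + C2 * (K * N0 * \<psi> h)
        + C1 * (K * \<phi> h * (N0 + \<psi> h)) + C1 * (K * Nd * \<psi> h) + C1 * (K * N0 * \<phi> h)"
        using HB mult_left_mono[OF t1 ch] mult_left_mono[OF t3 C2] mult_left_mono[OF t4 C2]
          mult_left_mono[OF t5 C1] mult_left_mono[OF t6 C1] mult_left_mono[OF t7 C1] by linarith
      then show ?thesis unfolding R_def .
    qed
    then show ?thesis unfolding Hnorm_eq X_def U1_def U0_def .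
  qed
  define S where "S = {h. e + h \<in> Om}"
  have \<phi>lim: "(\<phi> \<longlongrightarrow> 0) (at 0 within S)" using lim unfolding \<phi>_def S_def .
  have hlim: "((\<lambda>h. cmod h) \<longlongrightarrow> 0) (at 0 within S)"
    by (rule tendsto_norm_zero[OF tendsto_ident_at])
  have "((\<lambda>h. cmod h * (\<phi> h + Nd)) \<longlongrightarrow> 0 * (0 + Nd)) (at 0 within S)"
    by (intro tendsto_intros hlim \<phi>lim)
  then have \<psi>lim: "(\<psi> \<longlongrightarrow> 0) (at 0 within S)" unfolding \<psi>_def by simp
  have "(R \<longlongrightarrow> 0 * C3 * (K * (N0 + 0) * (N0 + 0)) + 0 * C3 * Nf
      + C2 * (K * 0 * (N0 + 0)) + C2 * (K * N0 * 0)
      + C1 * (K * 0 * (N0 + 0)) + C1 * (K * Nd * 0) + C1 * (K * N0 * 0)) (at 0 within S)"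
    unfolding R_def by (intro tendsto_intros hlim \<phi>lim \<psi>lim)
  then have Rlim: "(R \<longlongrightarrow> 0) (at 0 within S)" by simp
  have ev1: "\<forall>\<^sub>F h in at 0 within S. 0 \<le> Hnorm \<rho> m (\<lambda>q. (T (e + h) (U (e + h)) q - T e (U e) q) / h - D q)"
    by (simp add: Hnorm_eq Hn_nonneg)
  have ev2: "\<forall>\<^sub>F h in at 0 within S. Hnorm \<rho> m (\<lambda>q. (T (e + h) (U (e + h)) q - T e (U e) q) / h - D q) \<le> R h"
    unfolding eventually_at_filter S_def by (rule always_eventually) (auto intro: bound)
  have "((\<lambda>h. Hnorm \<rho> m (\<lambda>q. (T (e + h) (U (e + h)) q - T e (U e) q) / h - D q)) \<longlongrightarrow> 0) (at 0 within S)"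
    by (rule tendsto_sandwich[OF ev1 ev2 tendsto_const Rlim])
  then show ?thesis unfolding Hdiff_within_def S_def using Dsp by blast
qed


lemma gamma_exists:
  fixes \<beta> :: real
  assumes b: "\<beta> > 0" and nz: "\<forall>n::int. 1 / sqrt \<beta> \<noteq> of_int n"
  shows "\<exists>\<gamma>>0. \<forall>j::int. j \<noteq> 0 \<longrightarrow> \<gamma> \<le> \<bar>\<beta> * (real_of_int j)\<^sup>2 - 1\<bar>"
proof -
  define J where "J = {j::int. j \<noteq> 0 \<and> \<beta> * (real_of_int j)\<^sup>2 \<le> 2}"
  have Jsub: "J \<subseteq> {-(ceiling (2/\<beta>))..ceiling (2/\<beta>)}"
  proof
    fix j assume "j \<in> J"
    then have j0: "j \<noteq> 0" and le: "\<beta> * (real_of_int j)\<^sup>2 \<le> 2" by (auto simp: J_def)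
    have j1: "1 \<le> \<bar>real_of_int j\<bar>" using j0 by linarith
    have "\<bar>real_of_int j\<bar> \<le> (real_of_int j)\<^sup>2"
    proof -
      have "\<bar>real_of_int j\<bar> * 1 \<le> \<bar>real_of_int j\<bar> * \<bar>real_of_int j\<bar>"
        using j1 by (intro mult_left_mono) auto
      then show ?thesis by (simp add: power2_eq_square abs_mult_self_eq)
    qed
    then have "\<beta> * \<bar>real_of_int j\<bar> \<le> 2" using le b by (meson mult_left_mono less_imp_le order_trans)
    then have "\<bar>real_of_int j\<bar> \<le> 2/\<beta>" using b by (simp add: field_simps)
    then have "\<bar>j\<bar> \<le> ceiling (2/\<beta>)" by (simp add: le_ceiling_iff)
    then show "j \<in> {-(ceiling (2/\<beta>))..ceiling (2/\<beta>)}" by auto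
  qed
  have Jfin: "finite J" using Jsub finite_subset by blast
  define \<gamma> where "\<gamma> = Min (insert 1 ((\<lambda>j. \<bar>\<beta> * (real_of_int j)\<^sup>2 - 1\<bar>) ` J))"
  have ne: "\<beta> * (real_of_int j)\<^sup>2 \<noteq> 1" if "j \<noteq> 0" for j :: int
  proof
    assume h: "\<beta> * (real_of_int j)\<^sup>2 = 1"
    then have "(real_of_int \<bar>j\<bar>)\<^sup>2 = 1/\<beta>" using b by (simp add: field_simps)
    then have "real_of_int \<bar>j\<bar> = sqrt (1/\<beta>)" by (metis abs_ge_zero of_int_0_le_iff real_sqrt_abs real_sqrt_unique)
    then have "1 / sqrt \<beta> = of_int \<bar>j\<bar>" by (simp add: real_sqrt_divide)
    then show False using nz by blast
  qed
  have gpos: "\<gamma> > 0" unfolding \<gamma>_def using Jfin ne by (auto simp: J_def)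
  have "\<gamma> \<le> \<bar>\<beta> * (real_of_int j)\<^sup>2 - 1\<bar>" if j0: "j \<noteq> 0" for j :: int
  proof (cases "j \<in> J")
    case True then show ?thesis unfolding \<gamma>_def using Jfin by (intro Min_le) auto
  next
    case False
    then have "\<beta> * (real_of_int j)\<^sup>2 > 2" using j0 by (auto simp: J_def)
    moreover have "\<gamma> \<le> 1" unfolding \<gamma>_def using Jfin by (intro Min_le) auto
    ultimately show ?thesis by simp
  qed
  then show ?thesis using gpos by blast
qed


definition aq :: "real ^ ('d::finite) \<Rightarrow> 'd fidx \<Rightarrow> real" where
  "aq \<omega> q = kdot (fst q) \<omega>"
definition cq :: "real ^ ('d::finite) \<Rightarrow> real \<Rightarrow> 'd fidx \<Rightarrow> real" where
  "cq \<omega> \<beta> q = (aq \<omega> q)\<^sup>2 + (\<beta> * (real_of_int (snd q))^4 - (real_of_int (snd q))\<^sup>2)"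

lemma Nsym_eq: "Nsym \<omega> \<beta> e q = \<i> * complex_of_real (aq \<omega> q) - e * complex_of_real (cq \<omega> \<beta> q)"
  unfolding Nsym_def aq_def cq_def by (simp add: algebra_simps)

lemma Omega_props:
  assumes "\<mu> \<ge> 1" "e \<in> Omega \<sigma> \<mu>"
  shows "\<sigma>/2 \<le> Re e" "\<bar>Im e\<bar> \<le> 2*\<sigma>" "cmod e \<le> 2*\<sigma>" "\<sigma> \<le> cmod e"
proof -
  have r: "Re e \<ge> \<mu> * \<bar>Im e\<bar>" and c1: "\<sigma> \<le> cmod e" and c2: "cmod e \<le> 2*\<sigma>"
    using assms(2) by (auto simp: Omega_def)
  have "\<mu> * \<bar>Im e\<bar> \<ge> \<bar>Im e\<bar>" using assms(1) by (simp add: mult_le_cancel_right1)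
  then have ri: "\<bar>Im e\<bar> \<le> Re e" using r by linarith
  have "cmod e \<le> \<bar>Re e\<bar> + \<bar>Im e\<bar>" by (rule cmod_le)
  then show "\<sigma>/2 \<le> Re e" using c1 ri by linarith
  show "\<bar>Im e\<bar> \<le> 2*\<sigma>" using abs_Im_le_cmod[of e] c2 by linarith
  show "cmod e \<le> 2*\<sigma>" "\<sigma> \<le> cmod e" using c1 c2 by auto
qed

lemma N_basic:
  fixes a c :: real
  assumes "Re e \<ge> 0"
  shows "Re e * \<bar>c\<bar> \<le> cmod (\<i> * complex_of_real a - e * complex_of_real c)"
    and "\<bar>a\<bar> - \<bar>Im e\<bar> * \<bar>c\<bar> \<le> cmod (\<i> * complex_of_real a - e * complex_of_real c)"
proof -
  let ?N = "\<i> * complex_of_real a - e * complex_of_real c"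
  have "Re ?N = - (Re e * c)" by simp
  then have "\<bar>Re ?N\<bar> = Re e * \<bar>c\<bar>" using assms by (simp add: abs_mult)
  then show "Re e * \<bar>c\<bar> \<le> cmod ?N" using abs_Re_le_cmod[of ?N] by simp
  have "Im ?N = a - Im e * c" by simp
  then have "\<bar>Im ?N\<bar> \<ge> \<bar>a\<bar> - \<bar>Im e\<bar> * \<bar>c\<bar>" by (simp add: abs_mult[symmetric])
  then show "\<bar>a\<bar> - \<bar>Im e\<bar> * \<bar>c\<bar> \<le> cmod ?N" using abs_Im_le_cmod[of ?N] by simp
qed

lemma N_lower:
  fixes \<omega> :: "real ^ 'd::finite"
  assumes b: "\<beta> > 0" and g: "\<gamma> > 0" and gam: "\<forall>j::int. j \<noteq> 0 \<longrightarrow> \<gamma> \<le> \<bar>\<beta> * (real_of_int j)\<^sup>2 - 1\<bar>"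
    and s: "\<sigma> > 0" "\<sigma> \<le> \<beta> * sqrt (\<gamma>/2) / 2" and mu: "\<mu> \<ge> 1" and e: "e \<in> Omega \<sigma> \<mu>"
    and j: "snd q \<noteq> 0"
  shows "min (\<sigma>*\<gamma>/8) (sqrt (\<gamma>/2) / (2*(1+1/\<beta>))) * (1 + (real_of_int (snd q))\<^sup>2)
           \<le> cmod (Nsym \<omega> \<beta> e q)"
proof -
  define J where "J = real_of_int (snd q)"
  define a where "a = aq \<omega> q"
  define c where "c = cq \<omega> \<beta> q"
  define B where "B = \<beta> * J^4 - J\<^sup>2"
  define c0 where "c0 = min (\<sigma>*\<gamma>/8) (sqrt (\<gamma>/2) / (2*(1+1/\<beta>)))"
  have N: "Nsym \<omega> \<beta> e q = \<i> * complex_of_real a - e * complex_of_real c"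
    unfolding a_def c_def by (rule Nsym_eq)
  have cB: "c = a\<^sup>2 + B" unfolding c_def cq_def a_def B_def J_def by simp
  note O = Omega_props[OF mu e]
  have Re0: "Re e \<ge> 0" using O(1) s by linarith
  have NB1: "Re e * \<bar>c\<bar> \<le> cmod (Nsym \<omega> \<beta> e q)"
    using N_basic(1)[OF Re0, where a=a and c=c] by (simp add: N)
  have NB2: "\<bar>a\<bar> - \<bar>Im e\<bar> * \<bar>c\<bar> \<le> cmod (Nsym \<omega> \<beta> e q)"
    using N_basic(2)[OF Re0, where a=a and c=c] by (simp add: N)
  have J1: "J\<^sup>2 \<ge> 1"
  proof -
    have "1 \<le> \<bar>J\<bar>" using j unfolding J_def by linarith
    then have "1 * 1 \<le> \<bar>J\<bar> * \<bar>J\<bar>" by (intro mult_mono) auto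
    then show ?thesis by (simp add: power2_eq_square abs_mult_self_eq)
  qed
  have Bfac: "B = J\<^sup>2 * (\<beta> * J\<^sup>2 - 1)" unfolding B_def by (simp add: power2_eq_square algebra_simps power4_eq_xxxx)
  have gJ: "\<gamma> \<le> \<bar>\<beta> * J\<^sup>2 - 1\<bar>" using gam j unfolding J_def by blast
  have absB: "\<bar>B\<bar> \<ge> \<gamma> * J\<^sup>2"
  proof -
    have "\<bar>B\<bar> = J\<^sup>2 * \<bar>\<beta> * J\<^sup>2 - 1\<bar>" unfolding Bfac by (simp add: abs_mult)
    moreover have "\<gamma> * J\<^sup>2 \<le> \<bar>\<beta> * J\<^sup>2 - 1\<bar> * J\<^sup>2" using mult_right_mono[OF gJ, of "J\<^sup>2"] by simp
    ultimately show ?thesis by (simp add: mult.commute)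
  qed
  have c0pos1: "c0 \<le> \<sigma>*\<gamma>/8" and c0pos2: "c0 \<le> sqrt (\<gamma>/2) / (2*(1+1/\<beta>))" unfolding c0_def by (rule min.cobounded1, rule min.cobounded2)
  show ?thesis
  proof (cases "\<bar>c\<bar> \<ge> \<bar>B\<bar>/2")
    case True
    have "\<sigma>*\<gamma>/8 * (1 + J\<^sup>2) \<le> \<sigma>*\<gamma>/4 * J\<^sup>2" using J1 s g by (simp add: field_simps)
    also have "\<dots> = (\<sigma>/2) * ((\<gamma> * J\<^sup>2)/2)" by simp
    also have "\<dots> \<le> Re e * \<bar>c\<bar>"
      using O(1) True absB s g by (intro mult_mono) auto
    also have "\<dots> \<le> cmod (Nsym \<omega> \<beta> e q)" by (rule NB1)
    finally have "\<sigma>*\<gamma>/8 * (1 + J\<^sup>2) \<le> cmod (Nsym \<omega> \<beta> e q)" .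
    moreover have "c0 * (1 + J\<^sup>2) \<le> \<sigma>*\<gamma>/8 * (1 + J\<^sup>2)"
      using c0pos1 by (intro mult_right_mono) auto
    ultimately show ?thesis unfolding c0_def J_def by linarith
  next
    case False
    then have cl: "\<bar>c\<bar> < \<bar>B\<bar>/2" by simp
    have Bneg: "B < 0"
    proof (rule ccontr)
      assume "\<not> B < 0"
      then have "c \<ge> \<bar>B\<bar>" using cB by simp
      then show False using cl by linarith
    qed
    have bJ: "\<beta> * J\<^sup>2 < 1"
    proof -
      have "J\<^sup>2 * (\<beta> * J\<^sup>2 - 1) < 0" using Bneg Bfac by simp
      then show ?thesis using J1 by (simp add: mult_less_0_iff)
    qed
    have J2: "J\<^sup>2 < 1/\<beta>" using bJ b by (simp add: field_simps)
    have Ble: "\<bar>B\<bar> \<le> J\<^sup>2"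
    proof -
      have "\<bar>B\<bar> = J\<^sup>2 * (1 - \<beta> * J\<^sup>2)" unfolding Bfac using bJ by (simp add: abs_mult)
      also have "\<dots> \<le> J\<^sup>2 * 1" using b by (intro mult_left_mono) auto
      finally show ?thesis by simp
    qed
    have a2: "a\<^sup>2 \<ge> \<gamma>/2"
    proof -
      have "a\<^sup>2 = c - B" using cB by simp
      then have "a\<^sup>2 \<ge> \<bar>B\<bar>/2" using cl Bneg by linarith
      moreover have "\<bar>B\<bar> \<ge> \<gamma>"
      proof -
        have "\<gamma> * 1 \<le> \<gamma> * J\<^sup>2" using J1 g by (intro mult_left_mono) auto
        then show ?thesis using absB by linarith
      qed
      ultimately show ?thesis by linarith
    qed
    have aa: "\<bar>a\<bar> \<ge> sqrt (\<gamma>/2)" using a2 by (metis real_sqrt_abs real_sqrt_le_mono)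
    have "\<bar>Im e\<bar> * \<bar>c\<bar> \<le> (2*\<sigma>) * (1/(2*\<beta>))"
    proof (rule mult_mono)
      show "\<bar>c\<bar> \<le> 1/(2*\<beta>)" using cl Ble J2 by (simp add: field_simps)
    qed (use O(2) s b in auto)
    also have "\<dots> = \<sigma>/\<beta>" using b by simp
    also have "\<dots> \<le> sqrt (\<gamma>/2) / 2" using s(2) b by (simp add: field_simps)
    finally have "\<bar>Im e\<bar> * \<bar>c\<bar> \<le> sqrt (\<gamma>/2) / 2" .
    then have Nl: "sqrt (\<gamma>/2) / 2 \<le> cmod (Nsym \<omega> \<beta> e q)" using NB2 aa by linarith
    have "c0 * (1 + J\<^sup>2) \<le> sqrt (\<gamma>/2) / (2*(1+1/\<beta>)) * (1 + 1/\<beta>)"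
    proof (rule mult_mono)
      show "0 \<le> sqrt (\<gamma>/2) / (2*(1+1/\<beta>))" using b g by (intro divide_nonneg_pos) (auto intro: add_pos_pos)
    qed (use c0pos2 J2 b in auto)
    also have "\<dots> = sqrt (\<gamma>/2) / 2"
    proof -
      have *: "y > 0 \<Longrightarrow> x/(2*y)*y = x/2" for x y :: real by (simp add: field_simps)
      show ?thesis by (rule *) (use b in \<open>simp add: add_pos_pos\<close>)
    qed
    finally show ?thesis using Nl unfolding c0_def J_def by linarith
  qed
qed


lemma dq_identity:
  fixes x c e e' N N' :: complex
  assumes N: "N = x - e * c" and N': "N' = x - e' * c" and n0: "N \<noteq> 0" "N' \<noteq> 0" and ne: "e' \<noteq> e"
  shows "(e' / N' - e / N) / (e' - e) - x / N\<^sup>2 = x * c * (e' - e) / (N' * N\<^sup>2)"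
proof -
  have 1: "e' * N - e * N' = x * (e' - e)" unfolding N N' by (simp add: algebra_simps)
  have 2: "e' / N' - e / N = (e' * N - e * N') / (N' * N)" using n0 by (simp add: field_simps)
  have 3: "(e' / N' - e / N) / (e' - e) = x / (N' * N)" unfolding 2 1 using ne n0 by (simp add: field_simps)
  have 4: "N - N' = (e' - e) * c" unfolding N N' by (simp add: algebra_simps)
  have 5: "x / (N' * N) - x / N\<^sup>2 = x * (N - N') / (N' * N\<^sup>2)" using n0 by (simp add: field_simps power2_eq_square)
  show ?thesis unfolding 3 5 4 by (simp add: algebra_simps)
qed

lemma mult_core:
  fixes a c t c0 \<sigma> :: real and e e' N N' :: complex
  assumes N: "N = \<i> * complex_of_real a - e * complex_of_real c"
    and N': "N' = \<i> * complex_of_real a - e' * complex_of_real c"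
    and c0: "c0 > 0" and t: "t > 0" and s: "\<sigma> > 0"
    and lN: "c0 * t \<le> cmod N" and lN': "c0 * t \<le> cmod N'"
    and ne: "e' \<noteq> e" and Re: "\<sigma>/2 \<le> Re e" and Im: "\<bar>Im e\<bar> \<le> 2*\<sigma>" and ce: "cmod e \<le> 2*\<sigma>"
  shows "cmod (e / N) * t \<le> 2*\<sigma>/c0"
    and "cmod (\<i> * complex_of_real a / N\<^sup>2) * t \<le> 5/c0"
    and "cmod ((e' / N' - e / N) / (e' - e) - \<i> * complex_of_real a / N\<^sup>2) * t \<le> cmod (e' - e) * (10/(\<sigma>*c0))"
proof -
  define R where "R = cmod N"
  define R' where "R' = cmod N'"
  have Rp: "R > 0" using lN c0 t unfolding R_def by (smt (verit) mult_pos_pos)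
  have Rp': "R' > 0" using lN' c0 t unfolding R'_def by (smt (verit) mult_pos_pos)
  have N0: "N \<noteq> 0" using Rp R_def by auto
  have N0': "N' \<noteq> 0" using Rp' R'_def by auto
  have tR: "t / R \<le> 1/c0" using lN c0 Rp unfolding R_def by (simp add: field_simps)
  have tR': "t / R' \<le> 1/c0" using lN' c0 Rp' unfolding R'_def by (simp add: field_simps)
  have Re0: "Re e \<ge> 0" using Re s by linarith
  have b1: "Re e * \<bar>c\<bar> \<le> R" unfolding R_def N by (rule N_basic(1)[OF Re0])
  have b2: "\<bar>a\<bar> - \<bar>Im e\<bar> * \<bar>c\<bar> \<le> R" unfolding R_def N by (rule N_basic(2)[OF Re0])
  have cle: "\<bar>c\<bar> \<le> 2 * R / \<sigma>"
  proof -
    have "(\<sigma>/2) * \<bar>c\<bar> \<le> Re e * \<bar>c\<bar>" using Re by (intro mult_right_mono) auto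
    then have "(\<sigma>/2) * \<bar>c\<bar> \<le> R" using b1 by linarith
    then show ?thesis using s by (simp add: field_simps)
  qed
  have ale: "\<bar>a\<bar> \<le> 5 * R"
  proof -
    have "\<bar>Im e\<bar> * \<bar>c\<bar> \<le> (2*\<sigma>) * (2 * R / \<sigma>)" using Im cle by (intro mult_mono) auto
    also have "\<dots> = 4 * R" using s by simp
    finally show ?thesis using b2 by linarith
  qed
  show "cmod (e / N) * t \<le> 2*\<sigma>/c0"
  proof -
    have "cmod (e / N) * t = cmod e * (t / R)" unfolding R_def by (simp add: norm_divide)
    also have "\<dots> \<le> (2*\<sigma>) * (1/c0)" using ce tR t Rp s by (intro mult_mono) auto
    finally show ?thesis by simp
  qed
  show "cmod (\<i> * complex_of_real a / N\<^sup>2) * t \<le> 5/c0"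
  proof -
    have "cmod (\<i> * complex_of_real a / N\<^sup>2) * t = (\<bar>a\<bar> / R) * (t / R)"
      unfolding R_def by (simp add: norm_divide norm_mult norm_power power2_eq_square)
    also have "\<dots> \<le> 5 * (1/c0)"
      using ale tR t Rp by (intro mult_mono) (auto simp: field_simps)
    finally show ?thesis by simp
  qed
  show "cmod ((e' / N' - e / N) / (e' - e) - \<i> * complex_of_real a / N\<^sup>2) * t \<le> cmod (e' - e) * (10/(\<sigma>*c0))"
  proof -
    have id: "(e' / N' - e / N) / (e' - e) - \<i> * complex_of_real a / N\<^sup>2
        = \<i> * complex_of_real a * complex_of_real c * (e' - e) / (N' * N\<^sup>2)"
      by (rule dq_identity[OF N N' N0 N0' ne])
    have "cmod ((e' / N' - e / N) / (e' - e) - \<i> * complex_of_real a / N\<^sup>2) * t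
        = (\<bar>a\<bar> / R) * (\<bar>c\<bar> / R) * cmod (e' - e) * (t / R')"
      unfolding id R_def R'_def by (simp add: norm_divide norm_mult norm_power power2_eq_square)
    also have "\<dots> \<le> 5 * (2/\<sigma>) * cmod (e' - e) * (1/c0)"
    proof (intro mult_mono)
      show "\<bar>a\<bar> / R \<le> 5" using ale Rp by (simp add: field_simps)
      show "\<bar>c\<bar> / R \<le> 2/\<sigma>" using cle Rp s by (simp add: field_simps)
    qed (use tR' t Rp' Rp s in auto)
    also have "\<dots> = cmod (e' - e) * (10/(\<sigma>*c0))" by simp
    finally show ?thesis .
  qed
qed


lemma mult_core12:
  fixes a c t c0 \<sigma> :: real and e e' N N' :: complex
  assumes N: "N = \<i> * complex_of_real a - e * complex_of_real c"
    and c0: "c0 > 0" and t: "t > 0" and s: "\<sigma> > 0"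
    and lN: "c0 * t \<le> cmod N"
    and Re: "\<sigma>/2 \<le> Re e" and Im: "\<bar>Im e\<bar> \<le> 2*\<sigma>" and ce: "cmod e \<le> 2*\<sigma>"
  shows "cmod (e / N) * t \<le> 2*\<sigma>/c0"
    and "cmod (\<i> * complex_of_real a / N\<^sup>2) * t \<le> 5/c0"
proof -
  define R where "R = cmod N"
  have Rp: "R > 0" using lN c0 t unfolding R_def by (smt (verit) mult_pos_pos)
  have N0: "N \<noteq> 0" using Rp R_def by auto
  have tR: "t / R \<le> 1/c0" using lN c0 Rp unfolding R_def by (simp add: field_simps)
  have Re0: "Re e \<ge> 0" using Re s by linarith
  have b1: "Re e * \<bar>c\<bar> \<le> R" unfolding R_def N by (rule N_basic(1)[OF Re0])
  have b2: "\<bar>a\<bar> - \<bar>Im e\<bar> * \<bar>c\<bar> \<le> R" unfolding R_def N by (rule N_basic(2)[OF Re0])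
  have cle: "\<bar>c\<bar> \<le> 2 * R / \<sigma>"
  proof -
    have "(\<sigma>/2) * \<bar>c\<bar> \<le> Re e * \<bar>c\<bar>" using Re by (intro mult_right_mono) auto
    then have "(\<sigma>/2) * \<bar>c\<bar> \<le> R" using b1 by linarith
    then show ?thesis using s by (simp add: field_simps)
  qed
  have ale: "\<bar>a\<bar> \<le> 5 * R"
  proof -
    have "\<bar>Im e\<bar> * \<bar>c\<bar> \<le> (2*\<sigma>) * (2 * R / \<sigma>)" using Im cle by (intro mult_mono) auto
    also have "\<dots> = 4 * R" using s by simp
    finally show ?thesis using b2 by linarith
  qed
  show "cmod (e / N) * t \<le> 2*\<sigma>/c0"
  proof -
    have "cmod (e / N) * t = cmod e * (t / R)" unfolding R_def by (simp add: norm_divide)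
    also have "\<dots> \<le> (2*\<sigma>) * (1/c0)" using ce tR t Rp s by (intro mult_mono) auto
    finally show ?thesis by simp
  qed
  show "cmod (\<i> * complex_of_real a / N\<^sup>2) * t \<le> 5/c0"
  proof -
    have "cmod (\<i> * complex_of_real a / N\<^sup>2) * t = (\<bar>a\<bar> / R) * (t / R)"
      unfolding R_def by (simp add: norm_divide norm_mult norm_power power2_eq_square)
    also have "\<dots> \<le> 5 * (1/c0)"
      using ale tR t Rp by (intro mult_mono) (auto simp: field_simps)
    finally show ?thesis by simp
  qed
qed


theorem proposition7p5:
  fixes \<omega> :: "real ^ 'd" and \<rho> m \<beta> :: real and f :: "'d coeffs"
  assumes "\<rho> > 0" and "m > real CARD('d) + 5" and "\<beta> > 0"
    and "\<forall>n::int. 1 / sqrt \<beta> \<noteq> of_int n"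
    and "f \<in> Hspace \<rho> m"
  shows "\<exists>\<mu>0 \<sigma>0. \<sigma>0 > 0 \<and> (\<forall>\<mu> \<ge> \<mu>0. \<forall>\<sigma>. 0 < \<sigma> \<and> \<sigma> \<le> \<sigma>0 \<longrightarrow>
           (\<forall>U \<in> HOmega \<rho> m (Omega \<sigma> \<mu>).
              (\<lambda>e. Tmap \<omega> \<beta> f e (U e)) \<in> HOmega \<rho> m (Omega \<sigma> \<mu>)) \<and>
           (\<forall>U. (\<forall>e \<in> Omega \<sigma> \<mu>. U e \<in> Hspace \<rho> m \<and> Hdiff_within \<rho> m U e (Omega \<sigma> \<mu>)) \<longrightarrow>
              (\<forall>e \<in> Omega \<sigma> \<mu>. Tmap \<omega> \<beta> f e (U e) \<in> Hspace \<rho> m \<and>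
                 Hdiff_within \<rho> m (\<lambda>e'. Tmap \<omega> \<beta> f e' (U e')) e (Omega \<sigma> \<mu>))))"
proof -
  have r: "\<rho> \<ge> 0" using assms(1) by simp
  have m: "m \<ge> real CARD('d) + 1" using assms(2) by simp
  have b: "\<beta> > 0" by (rule assms(3))
  have f: "f \<in> Hspace \<rho> m" by (rule assms(5))
  obtain \<gamma> where g: "\<gamma> > 0" and gam: "\<forall>j::int. j \<noteq> 0 \<longrightarrow> \<gamma> \<le> \<bar>\<beta> * (real_of_int j)\<^sup>2 - 1\<bar>"
    using gamma_exists[OF assms(3,4)] by blast
  define \<sigma>0 where "\<sigma>0 = \<beta> * sqrt (\<gamma>/2) / 2"
  have s0: "\<sigma>0 > 0" unfolding \<sigma>0_def using b g by simp
  define Mf where "Mf e q = e / Nsym \<omega> \<beta> e q" for e q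
  define Md where "Md e q = \<i> * complex_of_real (aq \<omega> q) / (Nsym \<omega> \<beta> e q)\<^sup>2" for e q
  have Teq: "Tmap \<omega> \<beta> f e V q = Mf e q * ((- (of_int (snd q))\<^sup>2) * conv V V q + f q)" for e V q
    unfolding Tmap_def Mf_def by simp
  have main: "(\<forall>U \<in> HOmega \<rho> m (Omega \<sigma> \<mu>).
              (\<lambda>e. Tmap \<omega> \<beta> f e (U e)) \<in> HOmega \<rho> m (Omega \<sigma> \<mu>)) \<and>
           (\<forall>U. (\<forall>e \<in> Omega \<sigma> \<mu>. U e \<in> Hspace \<rho> m \<and> Hdiff_within \<rho> m U e (Omega \<sigma> \<mu>)) \<longrightarrow>
              (\<forall>e \<in> Omega \<sigma> \<mu>. Tmap \<omega> \<beta> f e (U e) \<in> Hspace \<rho> m \<and>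
                 Hdiff_within \<rho> m (\<lambda>e'. Tmap \<omega> \<beta> f e' (U e')) e (Omega \<sigma> \<mu>)))"
    if mu: "\<mu> \<ge> 1" and s: "0 < \<sigma>" "\<sigma> \<le> \<sigma>0" for \<mu> \<sigma>
  proof -
    define Om where "Om = Omega \<sigma> \<mu>"
    define c0 where "c0 = min (\<sigma>*\<gamma>/8) (sqrt (\<gamma>/2) / (2*(1+1/\<beta>)))"
    have c0: "c0 > 0" unfolding c0_def using s g b by (auto intro!: divide_pos_pos add_pos_pos)
    have s2: "\<sigma> \<le> \<beta> * sqrt (\<gamma>/2) / 2" using s unfolding \<sigma>0_def by simp
    have low: "c0 * (1 + (real_of_int (snd q))\<^sup>2) \<le> cmod (Nsym \<omega> \<beta> e q)" if "e \<in> Om" "snd q \<noteq> 0" for e q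
      unfolding c0_def by (rule N_lower[OF b g gam s(1) s2 mu]) (use that in \<open>auto simp: Om_def\<close>)
    have tpos: "1 + (real_of_int (snd q))\<^sup>2 > 0" for q :: "'d fidx" by (simp add: add_pos_nonneg)
    note OP = Omega_props[OF mu]
    have H12: "cmod (Mf e q) * (1 + (real_of_int (snd q))\<^sup>2) \<le> 2*\<sigma>/c0 \<and>
               cmod (Md e q) * (1 + (real_of_int (snd q))\<^sup>2) \<le> 5/c0" if "e \<in> Om" "snd q \<noteq> 0" for e q
      using mult_core12[OF Nsym_eq c0 tpos s(1) low[OF that]] OP[of e \<sigma>] that
      unfolding Mf_def Md_def Om_def by auto
    have H3: "cmod ((Mf e' q - Mf e q) / (e' - e) - Md e q) * (1 + (real_of_int (snd q))\<^sup>2) \<le> cmod (e' - e) * (10/(\<sigma>*c0))"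
      if "e \<in> Om" "e' \<in> Om" "e' \<noteq> e" "snd q \<noteq> 0" for e e' q
      using mult_core(3)[OF Nsym_eq Nsym_eq c0 tpos s(1) low[OF that(1,4)] low[OF that(2,4)] that(3)] OP[of e \<sigma>] that
      unfolding Mf_def Md_def Om_def by auto
    have C1: "2*\<sigma>/c0 \<ge> 0" "5/c0 \<ge> 0" "10/(\<sigma>*c0) \<ge> 0" using c0 s by auto
    have pA: "Tmap \<omega> \<beta> f e V \<in> Hspace \<rho> m \<and>
      Hnorm \<rho> m (Tmap \<omega> \<beta> f e V) \<le> 2*\<sigma>/c0 * ((2 * 2 powr m * sqrt (\<Sum>\<^sub>\<infinity>q::'d fidx. Pw q powr (-m))) * (Hnorm \<rho> m V)\<^sup>2 + Hnorm \<rho> m f)"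
      if e: "e \<in> Om" and V: "V \<in> Hspace \<rho> m" for e V
    proof -
      have h1e: "cmod (Mf e q) * (1 + (real_of_int (snd q))\<^sup>2) \<le> 2*\<sigma>/c0" if "snd q \<noteq> 0" for q
        using H12[OF e that] by blast
      show ?thesis by (rule partA[where T="Tmap \<omega> \<beta> f" and Mf=Mf, OF m r f Teq C1(1) h1e V])
    qed
    have h1: "cmod (Mf e q) * (1 + (real_of_int (snd q))\<^sup>2) \<le> 2*\<sigma>/c0" if "e \<in> Om" "snd q \<noteq> 0" for e q
      using H12[OF that] by blast
    have h2: "cmod (Md e q) * (1 + (real_of_int (snd q))\<^sup>2) \<le> 5/c0" if "e \<in> Om" "snd q \<noteq> 0" for e q
      using H12[OF that] by blast
    note pB = partB[where T="Tmap \<omega> \<beta> f" and Mf=Mf and Md=Md and Om=Om, OF m r f Teq C1(1) C1(2) C1(3) h1 h2 H3]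
    have part2: "\<forall>e \<in> Om. Tmap \<omega> \<beta> f e (U e) \<in> Hspace \<rho> m \<and> Hdiff_within \<rho> m (\<lambda>e'. Tmap \<omega> \<beta> f e' (U e')) e Om"
      if U: "\<forall>e \<in> Om. U e \<in> Hspace \<rho> m \<and> Hdiff_within \<rho> m U e Om" for U
    proof
      fix e assume e: "e \<in> Om"
      show "Tmap \<omega> \<beta> f e (U e) \<in> Hspace \<rho> m \<and> Hdiff_within \<rho> m (\<lambda>e'. Tmap \<omega> \<beta> f e' (U e')) e Om"
        using pA[OF e, of "U e"] pB[of U e] U e by auto
    qed
    have part1: "(\<lambda>e. Tmap \<omega> \<beta> f e (U e)) \<in> HOmega \<rho> m Om" if U: "U \<in> HOmega \<rho> m Om" for U
    proof -
      have Usp: "\<forall>e\<in>Om. U e \<in> Hspace \<rho> m" and Ud: "\<forall>e\<in>Om. Hdiff_within \<rho> m U e Om"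
        using U unfolding HOmega_def by auto
      obtain B where B: "\<forall>e\<in>Om. Hnorm \<rho> m (U e) \<le> B" using U unfolding HOmega_def by auto
      define K where "K = 2 * 2 powr m * sqrt (\<Sum>\<^sub>\<infinity>q::'d fidx. Pw q powr (-m))"
      have K0: "K \<ge> 0" unfolding K_def by (intro mult_nonneg_nonneg real_sqrt_ge_zero infsum_nonneg) auto
      have bd: "Hnorm \<rho> m (Tmap \<omega> \<beta> f e (U e)) \<le> 2*\<sigma>/c0 * (K * B\<^sup>2 + Hnorm \<rho> m f)" if e: "e \<in> Om" for e
      proof -
        have "Hnorm \<rho> m (Tmap \<omega> \<beta> f e (U e)) \<le> 2*\<sigma>/c0 * (K * (Hnorm \<rho> m (U e))\<^sup>2 + Hnorm \<rho> m f)"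
          using pA[OF e, of "U e"] Usp e unfolding K_def by auto
        also have "\<dots> \<le> 2*\<sigma>/c0 * (K * B\<^sup>2 + Hnorm \<rho> m f)"
        proof -
          have "(Hnorm \<rho> m (U e))\<^sup>2 \<le> B\<^sup>2"
            using B e by (intro power_mono) (auto simp: Hnorm_eq Hn_nonneg)
          then show ?thesis using K0 C1(1) by (intro mult_left_mono add_right_mono) auto
        qed
        finally show ?thesis .
      qed
      show ?thesis unfolding HOmega_def
        using part2[of U] Usp Ud bd by blast
    qed
    show ?thesis using part1 part2 unfolding Om_def by blast
  qed
  show ?thesis
    by (rule exI[of _ 1], rule exI[of _ \<sigma>0]) (use s0 main in auto)
qed

end
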